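(* For every $\tau>0$, $$\int_{\mathbb R^3\setminus\overline D}(fv_g-w_fg)\,dx=J(\tau;f,g)+\int_{\mathbb R^3\setminus\overline D}(\nabla\epsilon^0_f\cdot\nabla\epsilon^0_g+\tau^2\epsilon^0_f\epsilon^0_g)\,dx-e^{-\tau T}\int_{\mathbb R^3\setminus\overline D}(\nabla Z_f\cdot\nabla v_g+\tau^2Z_fv_g)\,dx.$$
   Context: Let $D\subset\mathbb R^3$ be a nonempty bounded open set with $C^2$ boundary such that $\mathbb R^3\setminus\overline D$ is connected. Fix $T\in(0,\infty)$. $B,B'$ are open balls with $\overline B\cap\overline D=\overline{B'}\cap\overline D=\emptyset$, $f=\chi_B$, $g=\chi_{B'}$. $u_f$ is the weak solution of $\partial_t^2u-\Delta u=0$ in $(\mathbb R^3\setminus\overline D)\times(0,T)$, $u(\cdot,0)=0$, $\partial_tu(\cdot,0)=f$, $u=0$ on $\partial D\times(0,T)$; $w_f(x,\tau)=\int_0^Te^{-\tau t}u_f(x,t)dt$. For $h\in L^2(\mathbb R^3)$, $v_h\in H^1(\mathbb R^3)$ is the weak solution of $(\Delta-\tau^2)v+h=0$ in $\mathbb R^3$. $\epsilon^0_h\in H^1(\mathbb R^3\setminus\overline D)$ ($h=f,g$) is the weak solution of $(\Delta-\tau^2)\epsilon=0$ in $\mathbb R^3\setminus\overline D$, $\epsilon=-v_h$ on $\partial D$. $F_f(x,\tau)=\partial_tu_f(x,T)+\tau u_f(x,T)$ and $Z_f\in H^1(\mathbb R^3\setminus\overline D)$ solves $(\Delta-\tau^2)Z_f=F_f$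 in $\mathbb R^3\setminus\overline D$, $Z_f=0$ on $\partial D$. $J(\tau;f,g)=\int_D(\nabla v_f\cdot\nabla v_g+\tau^2v_fv_g)\,dx$. *)

theory Defs
  imports "HOL-Analysis.Analysis"
begin

definition partial :: "'n::finite \<Rightarrow> (real^'n \<Rightarrow> real) \<Rightarrow> real^'n \<Rightarrow> real" where
  "partial i f x = frechet_derivative f (at x) (axis i 1)"

definition grad :: "(real^'n::finite \<Rightarrow> real) \<Rightarrow> real^'n \<Rightarrow> real^'n" where
  "grad f x = (\<chi> i. partial i f x)"

fun Ck :: "nat \<Rightarrow> (real^'n::finite \<Rightarrow> real) \<Rightarrow> bool" where
  "Ck 0 f = continuous_on UNIV f"
| "Ck (Suc k) f = (f differentiable_on UNIV \<and> continuous_on UNIV f \<and> (\<forall>i. Ck k (partial i f)))"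

definition smooth_fun :: "(real^'n::finite \<Rightarrow> real) \<Rightarrow> bool" where
  "smooth_fun f = (\<forall>k. Ck k f)"

definition test_fun :: "(real^'n::finite) set \<Rightarrow> (real^'n \<Rightarrow> real) \<Rightarrow> bool" where
  "test_fun U \<phi> = (smooth_fun \<phi> \<and> compact (closure {x. \<phi> x \<noteq> 0}) \<and> closure {x. \<phi> x \<noteq> 0} \<subseteq> U)"

definition C2_boundary :: "(real^3) set \<Rightarrow> bool" where
  "C2_boundary D = (\<forall>p \<in> frontier D. \<exists>r > 0. \<exists>(R :: real^3 \<Rightarrow> real^3) (\<phi> :: real^2 \<Rightarrow> real).
      orthogonal_transformation R \<and> Ck 2 \<phi> \<and>
      D \<inter> ball p r = {x \<in> ball p r. R (x - p) $ 3 < \<phi> (vector [R (x - p) $ 1, R (x - p) $ 2])})"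

definition L2 :: "(real^3) set \<Rightarrow> (real^3 \<Rightarrow> real) \<Rightarrow> bool" where
  "L2 U u = (set_borel_measurable lebesgue U u \<and> set_integrable lebesgue U (\<lambda>x. (u x)\<^sup>2))"

definition locally_L1 :: "(real^3) set \<Rightarrow> (real^3 \<Rightarrow> real) \<Rightarrow> bool" where
  "locally_L1 U u = (\<forall>K. compact K \<and> K \<subseteq> U \<longrightarrow> set_integrable lebesgue K u)"

definition weak_grad :: "(real^3) set \<Rightarrow> (real^3 \<Rightarrow> real) \<Rightarrow> (real^3 \<Rightarrow> real^3) \<Rightarrow> bool" where
  "weak_grad U u G = (locally_L1 U u \<and> (\<forall>i. locally_L1 U (\<lambda>x. G x $ i)) \<and>
     (\<forall>\<phi>. test_fun U \<phi> \<longrightarrow> (\<forall>i.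
        (LINT x:U|lebesgue. u x * partial i \<phi> x) = - (LINT x:U|lebesgue. G x $ i * \<phi> x))))"

definition H1 :: "(real^3) set \<Rightarrow> (real^3 \<Rightarrow> real) \<Rightarrow> (real^3 \<Rightarrow> real^3) \<Rightarrow> bool" where
  "H1 U u G = (L2 U u \<and> (\<forall>i. L2 U (\<lambda>x. G x $ i)) \<and> weak_grad U u G)"

text \<open>u \<in> H^1_0(U): the H^1(U)-closure of C_c^\<infinity>(U) (i.e. u = 0 on the boundary in the trace sense).\<close>
definition H10 :: "(real^3) set \<Rightarrow> (real^3 \<Rightarrow> real) \<Rightarrow> (real^3 \<Rightarrow> real^3) \<Rightarrow> bool" where
  "H10 U u G = (H1 U u G \<and> (\<exists>\<psi> :: nat \<Rightarrow> real^3 \<Rightarrow> real. (\<forall>n. test_fun U (\<psi> n)) \<and>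
     (\<lambda>n. LINT x:U|lebesgue. (u x - \<psi> n x)\<^sup>2 + (norm (G x - grad (\<psi> n) x))\<^sup>2) \<longlonglongrightarrow> 0))"

text \<open>v \<in> H^1(R^3) is the weak solution of (\<Delta> - \<tau>^2) v + h = 0 in R^3.\<close>
definition helmholtz_R3 :: "real \<Rightarrow> (real^3 \<Rightarrow> real) \<Rightarrow> (real^3 \<Rightarrow> real) \<Rightarrow> (real^3 \<Rightarrow> real^3) \<Rightarrow> bool" where
  "helmholtz_R3 \<tau> h v G = (H1 UNIV v G \<and>
     (\<forall>\<phi> G\<phi>. H1 UNIV \<phi> G\<phi> \<longrightarrow>
        (LINT x|lebesgue. G x \<bullet> G\<phi> x + \<tau>\<^sup>2 * v x * \<phi> x) = (LINT x|lebesgue. h x * \<phi> x)))"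

text \<open>\<epsilon> \<in> H^1(\<Omega>) is the weak solution of (\<Delta> - \<tau>^2) \<epsilon> = 0 in \<Omega>, \<epsilon> = -v on \<partial>\<Omega>.\<close>
definition exterior_dirichlet ::
  "(real^3) set \<Rightarrow> real \<Rightarrow> (real^3 \<Rightarrow> real) \<Rightarrow> (real^3 \<Rightarrow> real^3) \<Rightarrow> (real^3 \<Rightarrow> real) \<Rightarrow> (real^3 \<Rightarrow> real^3) \<Rightarrow> bool" where
  "exterior_dirichlet \<Omega> \<tau> v Gv e Ge = (H1 \<Omega> e Ge \<and> H10 \<Omega> (\<lambda>x. e x + v x) (\<lambda>x. Ge x + Gv x) \<and>
     (\<forall>\<phi> G\<phi>. H10 \<Omega> \<phi> G\<phi> \<longrightarrow> (LINT x:\<Omega>|lebesgue. Ge x \<bullet> G\<phi> x + \<tau>\<^sup>2 * e x * \<phi> x) = 0))"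

text \<open>Z \<in> H^1(\<Omega>) is the weak solution of (\<Delta> - \<tau>^2) Z = F in \<Omega>, Z = 0 on \<partial>\<Omega>.\<close>
definition dirichlet_source ::
  "(real^3) set \<Rightarrow> real \<Rightarrow> (real^3 \<Rightarrow> real) \<Rightarrow> (real^3 \<Rightarrow> real) \<Rightarrow> (real^3 \<Rightarrow> real^3) \<Rightarrow> bool" where
  "dirichlet_source \<Omega> \<tau> F Z GZ = (H10 \<Omega> Z GZ \<and>
     (\<forall>\<phi> G\<phi>. H10 \<Omega> \<phi> G\<phi> \<longrightarrow>
        (LINT x:\<Omega>|lebesgue. GZ x \<bullet> G\<phi> x + \<tau>\<^sup>2 * Z x * \<phi> x) = - (LINT x:\<Omega>|lebesgue. F x * \<phi> x)))"

text \<open>Weak (energy) solution of the wave equation u_tt - \<Delta>u = 0 in \<Omega> \<times> (0,T),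
  u(.,0) = 0, u_t(.,0) = f, u = 0 on \<partial>\<Omega> \<times> (0,T):
  u \<in> C([0,T]; H^1_0(\<Omega>)) \<inter> C^1([0,T]; L^2(\<Omega>)) (jointly measurable representative), with
  Gu(.,t) the weak gradient of u(.,t), ut(.,t) the time derivative in L^2(\<Omega>), and
  d/dt (ut, \<phi>) + (\<nabla>u, \<nabla>\<phi>) = 0 for every \<phi> \<in> H^1_0(\<Omega>).\<close>
definition wave_sol ::
  "(real^3) set \<Rightarrow> real \<Rightarrow> (real^3 \<Rightarrow> real) \<Rightarrow> (real^3 \<Rightarrow> real \<Rightarrow> real) \<Rightarrow> (real^3 \<Rightarrow> real \<Rightarrow> real^3)
     \<Rightarrow> (real^3 \<Rightarrow> real \<Rightarrow> real) \<Rightarrow> bool" where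
  "wave_sol \<Omega> T f u Gu ut = (
     (\<lambda>p. indicator (\<Omega> \<times> {0..T}) p * u (fst p) (snd p)) \<in> borel_measurable (lebesgue \<Otimes>\<^sub>M lebesgue) \<and>
     (\<forall>t\<in>{0..T}. H10 \<Omega> (\<lambda>x. u x t) (\<lambda>x. Gu x t) \<and> L2 \<Omega> (\<lambda>x. ut x t)) \<and>
     (\<forall>t\<in>{0..T}. ((\<lambda>s. LINT x:\<Omega>|lebesgue. (u x s - u x t)\<^sup>2 + (norm (Gu x s - Gu x t))\<^sup>2) \<longlongrightarrow> 0)
                    (at t within {0..T})) \<and>
     (\<forall>t\<in>{0..T}. ((\<lambda>s. LINT x:\<Omega>|lebesgue. (ut x s - ut x t)\<^sup>2) \<longlongrightarrow> 0) (at t within {0..T})) \<and>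
     (\<forall>t\<in>{0..T}. ((\<lambda>s. LINT x:\<Omega>|lebesgue. ((u x s - u x t) / (s - t) - ut x t)\<^sup>2) \<longlongrightarrow> 0)
                    (at t within {0..T})) \<and>
     (\<forall>\<phi> G\<phi>. H10 \<Omega> \<phi> G\<phi> \<longrightarrow> (\<forall>t\<in>{0..T}.
        (LINT x:\<Omega>|lebesgue. ut x t * \<phi> x) - (LINT x:\<Omega>|lebesgue. ut x 0 * \<phi> x)
          = - integral {0..t} (\<lambda>s. LINT x:\<Omega>|lebesgue. Gu x s \<bullet> G\<phi> x))) \<and>
     (LINT x:\<Omega>|lebesgue. (u x 0)\<^sup>2) = 0 \<and>
     (LINT x:\<Omega>|lebesgue. (ut x 0 - f x)\<^sup>2) = 0)"

definition laplace_T :: "real \<Rightarrow> real \<Rightarrow> (real^3 \<Rightarrow> real \<Rightarrow> real) \<Rightarrow> real^3 \<Rightarrow> real" where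
  "laplace_T T \<tau> u x = (LINT t:{0..T}|lebesgue. exp (- \<tau> * t) * u x t)"

end

theory Submission
  imports Defs
begin

lemma L2_meas: "L2 U a \<Longrightarrow> (\<lambda>x. indicator U x * a x) \<in> borel_measurable lebesgue"
  by (simp add: L2_def set_borel_measurable_def)

lemma L2_sq_int: "L2 U a \<Longrightarrow> integrable lebesgue (\<lambda>x. indicator U x * (a x)\<^sup>2)"
  by (simp add: L2_def set_integrable_def)

lemma L2I: "(\<lambda>x. indicator U x * a x) \<in> borel_measurable lebesgue \<Longrightarrow>
   integrable lebesgue (\<lambda>x. indicator U x * (a x)\<^sup>2) \<Longrightarrow> L2 U a"
  by (simp add: L2_def set_borel_measurable_def set_integrable_def)

lemma ind_sq: "indicator U x * (indicator U x :: real) = indicator U x"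
  by (simp add: indicator_def)

lemma abs_prod_sq_le: "\<bar>p * q\<bar> \<le> p\<^sup>2 + (q::real)\<^sup>2"
proof -
  have "0 \<le> (\<bar>p\<bar> - \<bar>q\<bar>)\<^sup>2" by simp
  then have "2 * (\<bar>p\<bar> * \<bar>q\<bar>) \<le> p\<^sup>2 + q\<^sup>2"
    by (simp add: power2_eq_square algebra_simps)
  moreover have "0 \<le> \<bar>p\<bar> * \<bar>q\<bar>" by simp
  ultimately show ?thesis using zero_le_power2[of p] zero_le_power2[of q] unfolding abs_mult by linarith
qed

lemma L2_prod_int:
  assumes "L2 U a" "L2 U b"
  shows "integrable lebesgue (\<lambda>x. indicator U x * (a x * b x))"
proof (rule Bochner_Integration.integrable_bound)
  show "integrable lebesgue (\<lambda>x. indicator U x * (a x)\<^sup>2 + indicator U x * (b x)\<^sup>2)"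
    using L2_sq_int[OF assms(1)] L2_sq_int[OF assms(2)] by auto
  have "(\<lambda>x. (indicator U x * a x) * (indicator U x * b x)) \<in> borel_measurable lebesgue"
    using L2_meas[OF assms(1)] L2_meas[OF assms(2)] by (rule borel_measurable_times)
  moreover have "(\<lambda>x. (indicator U x * a x) * (indicator U x * b x)) = (\<lambda>x. indicator U x * (a x * b x))"
    by (auto simp: indicator_def)
  ultimately show "(\<lambda>x. indicator U x * (a x * b x)) \<in> borel_measurable lebesgue" by simp
  show "AE x in lebesgue. norm (indicator U x * (a x * b x)) \<le> norm (indicator U x * (a x)\<^sup>2 + indicator U x * (b x)\<^sup>2)"
  proof (intro AE_I2)
    fix x
    have "\<bar>a x * b x\<bar> \<le> (a x)\<^sup>2 + (b x)\<^sup>2"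
      by (rule abs_prod_sq_le)
    then show "norm (indicator U x * (a x * b x)) \<le> norm (indicator U x * (a x)\<^sup>2 + indicator U x * (b x)\<^sup>2)"
      by (auto simp: indicator_def)
  qed
qed

lemma L2_prod_set_int: "L2 U a \<Longrightarrow> L2 U b \<Longrightarrow> set_integrable lebesgue U (\<lambda>x. a x * b x)"
  using L2_prod_int by (simp add: set_integrable_def)

lemma L2_add: assumes "L2 U a" "L2 U b" shows "L2 U (\<lambda>x. a x + b x)"
proof (rule L2I)
  show "(\<lambda>x. indicator U x * (a x + b x)) \<in> borel_measurable lebesgue"
    using L2_meas[OF assms(1)] L2_meas[OF assms(2)] by (simp add: distrib_left)
  have "integrable lebesgue (\<lambda>x. indicator U x * (a x)\<^sup>2 + indicator U x * (b x)\<^sup>2 + 2 * (indicator U x * (a x * b x)))"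
    using L2_sq_int[OF assms(1)] L2_sq_int[OF assms(2)] L2_prod_int[OF assms] by auto
  moreover have "(\<lambda>x. indicator U x * (a x)\<^sup>2 + indicator U x * (b x)\<^sup>2 + 2 * (indicator U x * (a x * b x))) = (\<lambda>x. indicator U x * (a x + b x)\<^sup>2)"
    by (auto simp: power2_eq_square algebra_simps)
  ultimately show "integrable lebesgue (\<lambda>x. indicator U x * (a x + b x)\<^sup>2)" by simp
qed

lemma L2_scale: assumes "L2 U a" shows "L2 U (\<lambda>x. c * a x)"
proof (rule L2I)
  show "(\<lambda>x. indicator U x * (c * a x)) \<in> borel_measurable lebesgue"
    using L2_meas[OF assms] by (simp add: mult.left_commute)
  have "integrable lebesgue (\<lambda>x. c\<^sup>2 * (indicator U x * (a x)\<^sup>2))"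
    using L2_sq_int[OF assms] by auto
  then show "integrable lebesgue (\<lambda>x. indicator U x * (c * a x)\<^sup>2)"
    by (simp add: power_mult_distrib mult.left_commute)
qed

lemma L2_diff: assumes "L2 U a" "L2 U b" shows "L2 U (\<lambda>x. a x - b x)"
  using L2_add[OF assms(1) L2_scale[OF assms(2), of "-1"]] by simp

lemma L2_zero: "L2 U (\<lambda>x. 0)"
  by (rule L2I) auto

lemma LINT_ind: "(LINT x:U|lebesgue. (f x :: real)) = integral\<^sup>L lebesgue (\<lambda>x. indicator U x * f x)"
  by (simp add: set_lebesgue_integral_def real_scaleR_def)

lemma CS_L2:
  assumes "L2 U a" "L2 U b"
  shows "\<bar>LINT x:U|lebesgue. a x * b x\<bar> \<le> sqrt (LINT x:U|lebesgue. (a x)\<^sup>2) * sqrt (LINT x:U|lebesgue. (b x)\<^sup>2)"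
proof -
  define A where "A = (LINT x:U|lebesgue. (a x)\<^sup>2)"
  define B where "B = (LINT x:U|lebesgue. (b x)\<^sup>2)"
  define C where "C = (LINT x:U|lebesgue. a x * b x)"
  have q: "0 \<le> t\<^sup>2 * A - 2 * t * C + B" for t
  proof -
    have L: "L2 U (\<lambda>x. t * a x - b x)" using L2_diff[OF L2_scale[OF assms(1)] assms(2)] .
    have "0 \<le> integral\<^sup>L lebesgue (\<lambda>x. indicator U x * (t * a x - b x)\<^sup>2)"
      by (intro integral_nonneg_AE) (auto simp: indicator_def)
    also have "integral\<^sup>L lebesgue (\<lambda>x. indicator U x * (t * a x - b x)\<^sup>2)
      = integral\<^sup>L lebesgue (\<lambda>x. t\<^sup>2 * (indicator U x * (a x)\<^sup>2) - 2 * t * (indicator U x * (a x * b x)) + indicator U x * (b x)\<^sup>2)"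
      by (rule Bochner_Integration.integral_cong) (auto simp: power2_eq_square algebra_simps)
    also have "\<dots> = t\<^sup>2 * A - 2 * t * C + B"
      using L2_sq_int[OF assms(1)] L2_sq_int[OF assms(2)] L2_prod_int[OF assms]
      by (simp add: A_def B_def C_def LINT_ind)
    finally show ?thesis .
  qed
  have A0: "0 \<le> A" unfolding A_def LINT_ind by (intro integral_nonneg_AE) (auto simp: indicator_def)
  have B0: "0 \<le> B" unfolding B_def LINT_ind by (intro integral_nonneg_AE) (auto simp: indicator_def)
  have "C\<^sup>2 \<le> A * B"
  proof (cases "A = 0")
    case True
    then have tt: "2 * t * C \<le> B" for t using q[of t] by simp
    have "C = 0"
    proof (rule ccontr)
      assume "C \<noteq> 0"
      have "2 * ((B + 1) / (2 * C)) * C \<le> B" by (rule tt)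
      also have "2 * ((B + 1) / (2 * C)) * C = B + 1" using \<open>C \<noteq> 0\<close> by (simp add: field_simps)
      finally show False by simp
    qed
    then show ?thesis using A0 B0 by simp
  next
    case False
    then have Ap: "0 < A" using A0 by simp
    have "0 \<le> (C/A)\<^sup>2 * A - 2 * (C/A) * C + B" by (rule q)
    also have "\<dots> = B - C\<^sup>2 / A" using Ap by (simp add: power2_eq_square field_simps)
    finally show ?thesis using Ap by (simp add: field_simps)
  qed
  then have "\<bar>C\<bar> \<le> sqrt (A * B)" by (metis real_sqrt_abs real_sqrt_le_mono)
  then show ?thesis by (simp add: A_def B_def C_def real_sqrt_mult)
qed

lemma cont_meas: "continuous_on UNIV (f :: real^3 \<Rightarrow> real) \<Longrightarrow> f \<in> borel_measurable lebesgue"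
  apply (rule measurable_completion)
  apply (simp add: borel_measurable_continuous_onI)
  done

lemma compact_lebesgue_finite: "compact (K :: (real^3) set) \<Longrightarrow> emeasure lebesgue K < \<infinity>"
  using emeasure_compact_finite[of K] emeasure_completion[of K lborel] compact_imp_closed[of K] by auto

lemma compact_sets_lebesgue: "compact (K :: (real^3) set) \<Longrightarrow> K \<in> sets lebesgue"
  by (simp add: compact_imp_closed)

lemma cc_integrable:
  fixes f :: "real^3 \<Rightarrow> real"
  assumes c: "continuous_on UNIV f" and K: "compact K" and z: "\<And>x. x \<notin> K \<Longrightarrow> f x = 0"
  shows "integrable lebesgue f"
proof -
  obtain M where M: "\<And>x. x \<in> K \<Longrightarrow> norm (f x) \<le> M"
    using compact_imp_bounded[OF compact_continuous_image[OF continuous_on_subset[OF c] K]]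
    by (auto simp: bounded_iff)
  have "integrable lebesgue (\<lambda>x. indicator K x *\<^sub>R f x)"
    by (rule integrableI_bounded_set_indicator[where B=M])
       (use M K compact_lebesgue_finite[OF K] in \<open>auto simp: compact_sets_lebesgue cont_meas[OF c]\<close>)
  moreover have "(\<lambda>x. indicator K x *\<^sub>R f x) = f" using z by (auto simp: indicator_def of_bool_def)
  ultimately show ?thesis by simp
qed

lemma lebesgue_translate:
  fixes h :: "real^3 \<Rightarrow> real"
  assumes "h \<in> borel_measurable lebesgue"
  shows "integral\<^sup>L lebesgue (\<lambda>x. h (t + x)) = integral\<^sup>L lebesgue h"
proof -
  have T: "(\<lambda>x::real^3. t + (\<Sum>j\<in>Basis. (1 * (x \<bullet> j)) *\<^sub>R j)) = (\<lambda>x. t + x)"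
    by (simp add: euclidean_representation)
  have T': "(\<lambda>x::real^3. t + (\<Sum>j\<in>Basis. (x \<bullet> j) *\<^sub>R j)) = (\<lambda>x. t + x)"
    by (simp add: euclidean_representation)
  have "lebesgue = density (distr lebesgue lebesgue (\<lambda>x::real^3. t + (\<Sum>j\<in>Basis. (x \<bullet> j) *\<^sub>R j))) (\<lambda>_. 1)"
    using lebesgue_affine_euclidean[of "\<lambda>_. 1" t] by simp
  then have "lebesgue = density (distr lebesgue lebesgue (\<lambda>x::real^3. t + x)) (\<lambda>_. 1)"
    unfolding T' by simp
  then have L: "lebesgue = distr lebesgue lebesgue (\<lambda>x::real^3. t + x)" by (simp add: density_1)
  have m: "(\<lambda>x::real^3. t + x) \<in> lebesgue \<rightarrow>\<^sub>M lebesgue"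
  proof -
    have "(\<lambda>x::real^3. t + (\<Sum>j\<in>Basis. (1 * (x \<bullet> j)) *\<^sub>R j)) \<in> lebesgue \<rightarrow>\<^sub>M lebesgue"
      by (rule lebesgue_affine_measurable) simp
    then show ?thesis unfolding T .
  qed
  have "integral\<^sup>L lebesgue h = integral\<^sup>L (distr lebesgue lebesgue (\<lambda>x::real^3. t + x)) h"
    using L by simp
  also have "\<dots> = integral\<^sup>L lebesgue (\<lambda>x. h (t + x))"
    by (rule integral_distr[OF m assms])
  finally show ?thesis by simp
qed

lemma line_deriv:
  fixes h :: "real^3 \<Rightarrow> real"
  assumes dif: "\<And>y. h differentiable at y"
  shows "((\<lambda>r. h (x + r *\<^sub>R e)) has_real_derivative frechet_derivative h (at (x + r *\<^sub>R e)) e) (at r)"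
proof -
  let ?y = "x + r *\<^sub>R e"
  have hd: "(h has_derivative frechet_derivative h (at ?y)) (at ?y)"
    using dif frechet_derivative_works by blast
  have ld: "((\<lambda>r. x + r *\<^sub>R e) has_derivative (\<lambda>s. s *\<^sub>R e)) (at r)"
    by (auto intro!: derivative_eq_intros)
  have "((\<lambda>r. h (x + r *\<^sub>R e)) has_derivative (\<lambda>s. frechet_derivative h (at ?y) (s *\<^sub>R e))) (at r)"
    using has_derivative_compose[OF ld hd] .
  moreover have "(\<lambda>s. frechet_derivative h (at ?y) (s *\<^sub>R e)) = (\<lambda>s. frechet_derivative h (at ?y) e * s)"
  proof
    fix s
    have "linear (frechet_derivative h (at ?y))"
      using has_derivative_linear[OF hd] .
    then show "frechet_derivative h (at ?y) (s *\<^sub>R e) = frechet_derivative h (at ?y) e * s"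
      by (simp add: linear_cmul)
  qed
  ultimately show ?thesis by (simp add: has_field_derivative_def)
qed

lemma deriv_zero_outside:
  fixes h :: "real^3 \<Rightarrow> real"
  assumes K: "compact K" and z: "\<And>x. x \<notin> K \<Longrightarrow> h x = 0" and x: "x \<notin> K"
  shows "frechet_derivative h (at x) = (\<lambda>_. 0)"
proof -
  have "((\<lambda>_. 0) has_derivative (\<lambda>_. 0)) (at x)" by simp
  then have "(h has_derivative (\<lambda>_. 0)) (at x)"
    by (rule has_derivative_transform_within_open[where s="- K"])
       (use K x z compact_imp_closed in auto)
  then show ?thesis using frechet_derivative_at by metis
qed

lemma deriv_integral_zero:
  fixes h :: "real^3 \<Rightarrow> real" and e :: "real^3"
  assumes dif: "\<And>y. h differentiable at y"
    and cont: "continuous_on UNIV (\<lambda>x. frechet_derivative h (at x) e)"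
    and K: "compact K" and z: "\<And>x. x \<notin> K \<Longrightarrow> h x = 0"
  shows "integral\<^sup>L lebesgue (\<lambda>x. frechet_derivative h (at x) e) = 0"
proof -
  define d where "d = (\<lambda>x. frechet_derivative h (at x) e)"
  have d0: "d x = 0" if "x \<notin> K" for x
    using deriv_zero_outside[OF K z that] by (simp add: d_def)
  have hc: "continuous_on UNIV h"
    using dif by (simp add: continuous_at_imp_continuous_on differentiable_imp_continuous_within)
  obtain M where M: "\<And>x. x \<in> K \<Longrightarrow> norm (d x) \<le> M"
    using compact_imp_bounded[OF compact_continuous_image[OF continuous_on_subset[OF cont[folded d_def]] K]]
    by (auto simp: bounded_iff)
  define M' where "M' = max M 0"
  have M': "\<bar>d x\<bar> \<le> M'" for x
    using M[of x] d0[of x] by (cases "x \<in> K") (auto simp: M'_def)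
  obtain R where R: "\<And>x. x \<in> K \<Longrightarrow> norm x \<le> R"
    using compact_imp_bounded[OF K] by (auto simp: bounded_iff)
  define C where "C = cball (0::real^3) (R + norm e)"
  define s :: "nat \<Rightarrow> real" where "s n = inverse (real (Suc n))" for n
  have s0: "0 < s n" "s n \<le> 1" for n by (auto simp: s_def field_simps)
  define Q where "Q n x = (h (x + s n *\<^sub>R e) - h x) / s n" for n x
  have hint: "integrable lebesgue h" by (rule cc_integrable[OF hc K z])
  have hmeas: "h \<in> borel_measurable lebesgue" by (rule cont_meas[OF hc])
  have Qmeas: "Q n \<in> borel_measurable lebesgue" for n
  proof -
    have "(\<lambda>x. h (x + s n *\<^sub>R e)) \<in> borel_measurable lebesgue"
      by (rule cont_meas) (auto intro!: continuous_on_compose2[OF hc] continuous_intros)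
    then show ?thesis unfolding Q_def using hmeas by measurable
  qed
  have Qint: "integral\<^sup>L lebesgue (Q n) = 0" for n
  proof -
    have i2: "integrable lebesgue (\<lambda>x. h (x + s n *\<^sub>R e))"
      by (rule cc_integrable[where K="(\<lambda>x. x - s n *\<^sub>R e) ` K"])
         (auto intro!: continuous_on_compose2[OF hc] continuous_intros compact_translation_subtract K z
               simp: image_iff)
    have "integral\<^sup>L lebesgue (\<lambda>x. h (x + s n *\<^sub>R e)) = integral\<^sup>L lebesgue h"
      using lebesgue_translate[OF hmeas, of "s n *\<^sub>R e"] by (simp add: add.commute)
    then show ?thesis unfolding Q_def using i2 hint by simp
  qed
  have lim: "(\<lambda>n. Q n x) \<longlonglongrightarrow> d x" for x
  proof -
    have D: "((\<lambda>r. h (x + r *\<^sub>R e)) has_real_derivative d x) (at 0)"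
      using line_deriv[OF dif, of x e 0] by (simp add: d_def)
    then have l1: "((\<lambda>r. (h (x + r *\<^sub>R e) - h x) / r) \<longlongrightarrow> d x) (at 0)"
      by (simp add: DERIV_def)
    have l2: "filterlim s (at 0) sequentially"
      unfolding filterlim_at s_def using LIMSEQ_inverse_real_of_nat by auto
    show ?thesis
      unfolding Q_def using filterlim_compose[OF l1 l2] by simp
  qed
  have bound: "norm (Q n x) \<le> M' * indicator C x" for n x
  proof (cases "x \<in> C")
    case True
    obtain zz where zz: "0 < zz" "zz < s n"
      and eq: "h (x + s n *\<^sub>R e) - h (x + 0 *\<^sub>R e) = (s n - 0) * d (x + zz *\<^sub>R e)"
      using MVT2[of 0 "s n" "\<lambda>r. h (x + r *\<^sub>R e)" "\<lambda>r. d (x + r *\<^sub>R e)"] s0[of n]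
        line_deriv[OF dif, of x e] unfolding d_def by auto
    have "Q n x = d (x + zz *\<^sub>R e)" using eq s0[of n] by (simp add: Q_def)
    then show ?thesis using True M' by simp
  next
    case False
    then have nx: "norm x > R + norm e" by (simp add: C_def)
    have "x \<notin> K"
    proof
      assume "x \<in> K" then have "norm x \<le> R" by (rule R)
      then show False using nx norm_ge_zero[of e] by linarith
    qed
    moreover have "x + s n *\<^sub>R e \<notin> K"
    proof
      assume "x + s n *\<^sub>R e \<in> K"
      then have "norm (x + s n *\<^sub>R e) \<le> R" by (rule R)
      moreover have "norm (s n *\<^sub>R e) \<le> norm e" using s0[of n] by (simp add: mult_left_le_one_le)
      moreover have "norm x \<le> norm (x + s n *\<^sub>R e) + norm (s n *\<^sub>R e)"
        by (metis add_diff_cancel norm_triangle_ineq4)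
      ultimately show False using nx by linarith
    qed
    ultimately show ?thesis using False by (simp add: Q_def z)
  qed
  have wint: "integrable lebesgue (\<lambda>x. M' * indicator C x)"
    using integrable_real_indicator[of C lebesgue] compact_lebesgue_finite[of C]
      compact_sets_lebesgue[of C] by (auto simp: C_def)
  have "(\<lambda>n. integral\<^sup>L lebesgue (Q n)) \<longlonglongrightarrow> integral\<^sup>L lebesgue d"
    by (rule integral_dominated_convergence[OF _ Qmeas wint])
       (use cont_meas[OF cont[folded d_def]] lim bound in auto)
  then have "(\<lambda>n. 0) \<longlonglongrightarrow> integral\<^sup>L lebesgue d" using Qint by simp
  then show ?thesis unfolding d_def using LIMSEQ_unique tendsto_const by blast
qed

lemma test_props:
  fixes \<psi> :: "real^3 \<Rightarrow> real"
  assumes "test_fun U \<psi>"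
  shows "\<And>y. \<psi> differentiable at y" "continuous_on UNIV \<psi>"
    "\<And>i. continuous_on UNIV (partial i \<psi>)"
    "compact (closure {x. \<psi> x \<noteq> 0})" "closure {x. \<psi> x \<noteq> 0} \<subseteq> U"
    "\<And>x. x \<notin> closure {x. \<psi> x \<noteq> 0} \<Longrightarrow> \<psi> x = 0"
    "\<And>x i. x \<notin> closure {x. \<psi> x \<noteq> 0} \<Longrightarrow> partial i \<psi> x = 0"
proof -
  have "Ck (Suc 0) \<psi>" using assms by (simp add: test_fun_def smooth_fun_def)
  then have c1: "\<psi> differentiable_on UNIV" "continuous_on UNIV \<psi>" "\<And>i. continuous_on UNIV (partial i \<psi>)"
    by auto
  show "\<And>y. \<psi> differentiable at y" using c1(1) by (simp add: differentiable_on_def)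
  show "continuous_on UNIV \<psi>" by fact
  show "\<And>i. continuous_on UNIV (partial i \<psi>)" by fact
  show K: "compact (closure {x. \<psi> x \<noteq> 0})" "closure {x. \<psi> x \<noteq> 0} \<subseteq> U"
    using assms unfolding test_fun_def by auto
  show z: "\<And>x. x \<notin> closure {x. \<psi> x \<noteq> 0} \<Longrightarrow> \<psi> x = 0"
  proof -
    fix x assume "x \<notin> closure {x. \<psi> x \<noteq> 0}"
    then have "x \<notin> {x. \<psi> x \<noteq> 0}" by (rule contra_subsetD[OF closure_subset])
    then show "\<psi> x = 0" by simp
  qed
  show "\<And>x i. x \<notin> closure {x. \<psi> x \<noteq> 0} \<Longrightarrow> partial i \<psi> x = 0"
    using deriv_zero_outside[OF K(1) z] by (simp add: partial_def)
qed

lemma partial_mult: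
  fixes \<psi> \<phi> :: "real^3 \<Rightarrow> real"
  assumes "\<psi> differentiable at x" "\<phi> differentiable at x"
  shows "frechet_derivative (\<lambda>x. \<psi> x * \<phi> x) (at x) e
     = \<psi> x * frechet_derivative \<phi> (at x) e + frechet_derivative \<psi> (at x) e * \<phi> x"
proof -
  have "((\<lambda>x. \<psi> x * \<phi> x) has_derivative
      (\<lambda>h. \<psi> x * frechet_derivative \<phi> (at x) h + frechet_derivative \<psi> (at x) h * \<phi> x)) (at x)"
    using has_derivative_mult[OF assms[unfolded frechet_derivative_works]] .
  from fun_cong[OF frechet_derivative_at[OF this], of e] show ?thesis by simp
qed

lemma IBP_test:
  fixes \<psi> \<phi> :: "real^3 \<Rightarrow> real"
  assumes "test_fun U \<psi>" "test_fun V \<phi>"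
  shows "integral\<^sup>L lebesgue (\<lambda>x. \<psi> x * partial i \<phi> x) = - integral\<^sup>L lebesgue (\<lambda>x. partial i \<psi> x * \<phi> x)"
proof -
  note p = test_props[OF assms(1)] and q = test_props[OF assms(2)]
  let ?K = "closure {x. \<psi> x \<noteq> 0}"
  define h where "h x = \<psi> x * \<phi> x" for x
  have hd: "\<And>y. h differentiable at y"
    unfolding h_def using p(1) q(1) by (auto intro: differentiable_mult)
  have fd: "frechet_derivative h (at x) (axis i 1) = \<psi> x * partial i \<phi> x + partial i \<psi> x * \<phi> x" for x
    unfolding h_def partial_def using partial_mult[OF p(1) q(1)] by simp
  have c: "continuous_on UNIV (\<lambda>x. frechet_derivative h (at x) (axis i 1))"
    unfolding fd using p(2,3) q(2,3) by (auto intro!: continuous_intros)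
  have z: "\<And>x. x \<notin> ?K \<Longrightarrow> h x = 0" unfolding h_def by (metis p(6) mult_zero_left)
  have "integral\<^sup>L lebesgue (\<lambda>x. frechet_derivative h (at x) (axis i 1)) = 0"
    by (rule deriv_integral_zero[OF hd c p(4) z])
  then have 0: "integral\<^sup>L lebesgue (\<lambda>x. \<psi> x * partial i \<phi> x + partial i \<psi> x * \<phi> x) = 0"
    unfolding fd .
  have c1: "continuous_on UNIV (\<lambda>x. \<psi> x * partial i \<phi> x)"
    using p(2) q(3) by (intro continuous_intros)
  have c2: "continuous_on UNIV (\<lambda>x. partial i \<psi> x * \<phi> x)"
    using p(3) q(2) by (intro continuous_intros)
  have i1: "integrable lebesgue (\<lambda>x. \<psi> x * partial i \<phi> x)"
    by (rule cc_integrable[OF c1 p(4)]) (metis p(6) mult_zero_left)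
  have i2: "integrable lebesgue (\<lambda>x. partial i \<psi> x * \<phi> x)"
    by (rule cc_integrable[OF c2 p(4)]) (metis p(7) mult_zero_left)
  have "integral\<^sup>L lebesgue (\<lambda>x. \<psi> x * partial i \<phi> x + partial i \<psi> x * \<phi> x)
     = integral\<^sup>L lebesgue (\<lambda>x. \<psi> x * partial i \<phi> x) + integral\<^sup>L lebesgue (\<lambda>x. partial i \<psi> x * \<phi> x)"
    by (rule Bochner_Integration.integral_add[OF i1 i2])
  with 0 show ?thesis by linarith
qed

lemma test_L2_aux:
  fixes f :: "real^3 \<Rightarrow> real"
  assumes "continuous_on UNIV f" "compact K" "\<And>x. x \<notin> K \<Longrightarrow> f x = 0"
  shows "L2 UNIV f"
proof (rule L2I)
  show "(\<lambda>x. indicator UNIV x * f x) \<in> borel_measurable lebesgue"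
    using cont_meas[OF assms(1)] by simp
  have "integrable lebesgue (\<lambda>x. (f x)\<^sup>2)"
    by (rule cc_integrable[OF _ assms(2)]) (use assms in \<open>auto intro!: continuous_intros\<close>)
  then show "integrable lebesgue (\<lambda>x. indicator UNIV x * (f x)\<^sup>2)" by simp
qed

lemma grad_comp: "grad \<psi> x $ i = partial i \<psi> x"
  by (simp add: grad_def)

lemma test_H1:
  fixes \<psi> :: "real^3 \<Rightarrow> real"
  assumes "test_fun U \<psi>"
  shows "H1 UNIV \<psi> (grad \<psi>)"
proof -
  note p = test_props[OF assms]
  have L: "L2 UNIV \<psi>" by (rule test_L2_aux[OF p(2,4,6)])
  have Li: "L2 UNIV (\<lambda>x. grad \<psi> x $ i)" for i
    unfolding grad_comp by (rule test_L2_aux[OF p(3,4,7)])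
  have int1: "integrable lebesgue \<psi>" by (rule cc_integrable[OF p(2,4,6)])
  have int2: "integrable lebesgue (\<lambda>x. grad \<psi> x $ i)" for i
    unfolding grad_comp by (rule cc_integrable[OF p(3,4,7)])
  have loc1: "locally_L1 UNIV \<psi>"
    unfolding locally_L1_def set_integrable_def
    using integrable_mult_indicator[OF _ int1] compact_sets_lebesgue by auto
  have loc2: "locally_L1 UNIV (\<lambda>x. grad \<psi> x $ i)" for i
    unfolding locally_L1_def set_integrable_def
    using integrable_mult_indicator[OF _ int2] compact_sets_lebesgue by auto
  have ibp: "(LINT x:UNIV|lebesgue. \<psi> x * partial i \<phi> x) = - (LINT x:UNIV|lebesgue. grad \<psi> x $ i * \<phi> x)"
    if "test_fun UNIV \<phi>" for \<phi> i
    using IBP_test[OF assms that, of i] by (simp add: LINT_ind grad_comp)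
  show ?thesis
    unfolding H1_def weak_grad_def using L Li loc1 loc2 ibp by blast
qed

lemma LINT_UNIV_restrict:
  fixes f :: "real^3 \<Rightarrow> real"
  assumes "\<And>x. x \<notin> S \<Longrightarrow> f x = 0"
  shows "integral\<^sup>L lebesgue f = (LINT x:S|lebesgue. f x)"
  unfolding LINT_ind
proof (rule Bochner_Integration.integral_cong)
  fix x show "f x = indicator S x * f x"
    by (cases "x \<in> S") (simp_all add: assms)
qed simp

lemma test_zero_out:
  fixes \<psi> :: "real^3 \<Rightarrow> real"
  assumes "test_fun U \<psi>" "x \<notin> U"
  shows "\<psi> x = 0" "grad \<psi> x = 0"
proof -
  note p = test_props[OF assms(1)]
  have "x \<notin> closure {x. \<psi> x \<noteq> 0}" using p(5) assms(2) by blast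
  then show "\<psi> x = 0" "grad \<psi> x = 0"
    by (rule p(6)) (simp add: vec_eq_iff grad_comp p(7)[OF \<open>x \<notin> closure {x. \<psi> x \<noteq> 0}\<close>])
qed

definition P :: "(real^3) set \<Rightarrow> (real^3 \<Rightarrow> real) \<Rightarrow> (real^3 \<Rightarrow> real) \<Rightarrow> real" where
  "P U f g = (LINT x:U|lebesgue. f x * g x)"

lemma P_int: "L2 U f \<Longrightarrow> L2 U g \<Longrightarrow> integrable lebesgue (\<lambda>x. indicator U x * (f x * g x))"
  by (rule L2_prod_int)

lemma P_add2: assumes "L2 U f" "L2 U g1" "L2 U g2"
  shows "P U f (\<lambda>x. g1 x + g2 x) = P U f g1 + P U f g2"
proof -
  have "P U f (\<lambda>x. g1 x + g2 x) = integral\<^sup>L lebesgue (\<lambda>x. indicator U x * (f x * g1 x) + indicator U x * (f x * g2 x))"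
    unfolding P_def LINT_ind by (simp add: algebra_simps)
  also have "\<dots> = P U f g1 + P U f g2"
    unfolding P_def LINT_ind using P_int[OF assms(1,2)] P_int[OF assms(1,3)] by simp
  finally show ?thesis .
qed

lemma P_scale2: "P U f (\<lambda>x. c * g x) = c * P U f g"
  unfolding P_def LINT_ind by (simp add: algebra_simps)

lemma P_sym: "P U f g = P U g f"
  unfolding P_def by (simp add: mult.commute)

lemma P_diff2: assumes "L2 U f" "L2 U g1" "L2 U g2"
  shows "P U f (\<lambda>x. g1 x - g2 x) = P U f g1 - P U f g2"
  using P_add2[OF assms(1,2) L2_scale[OF assms(3), of "-1"]] P_scale2[of U f "-1" g2] by simp

lemma P_CS: "L2 U f \<Longrightarrow> L2 U g \<Longrightarrow> \<bar>P U f g\<bar> \<le> sqrt (P U f f) * sqrt (P U g g)"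
  unfolding P_def using CS_L2 by (simp add: power2_eq_square)

lemma P_nonneg: "0 \<le> P U f f"
  unfolding P_def LINT_ind by (intro integral_nonneg_AE) (auto simp: indicator_def)

lemma P_lim:
  assumes f: "L2 U f" and gn: "\<And>n. L2 U (g n)" and g: "L2 U g0"
    and lim: "(\<lambda>n. P U (\<lambda>x. g n x - g0 x) (\<lambda>x. g n x - g0 x)) \<longlonglongrightarrow> 0"
  shows "(\<lambda>n. P U f (g n)) \<longlonglongrightarrow> P U f g0"
proof -
  have b: "\<bar>P U f (g n) - P U f g0\<bar> \<le> sqrt (P U f f) * sqrt (P U (\<lambda>x. g n x - g0 x) (\<lambda>x. g n x - g0 x))" for n
    using P_CS[OF f L2_diff[OF gn g]] P_diff2[OF f gn g] by simp
  define h where "h n = sqrt (P U f f) * sqrt (P U (\<lambda>x. g n x - g0 x) (\<lambda>x. g n x - g0 x))" for n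
  have "h \<longlonglongrightarrow> sqrt (P U f f) * sqrt 0"
    unfolding h_def by (intro tendsto_intros lim)
  then have up: "h \<longlonglongrightarrow> 0" by simp
  then have lo: "(\<lambda>n. - h n) \<longlonglongrightarrow> 0" using tendsto_minus[OF up] by simp
  have "(\<lambda>n. P U f (g n) - P U f g0) \<longlonglongrightarrow> 0"
  proof (rule tendsto_sandwich[OF _ _ lo up])
    show "\<forall>\<^sub>F n in sequentially. - h n \<le> P U f (g n) - P U f g0"
    proof (intro always_eventually allI)
      fix n show "- h n \<le> P U f (g n) - P U f g0" using b[of n] unfolding h_def abs_le_iff by linarith
    qed
    show "\<forall>\<^sub>F n in sequentially. P U f (g n) - P U f g0 \<le> h n"
    proof (intro always_eventually allI)
      fix n show "P U f (g n) - P U f g0 \<le> h n" using b[of n] unfolding h_def abs_le_iff by linarith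
    qed
  qed
  then show ?thesis by (simp add: LIM_zero_iff)
qed

lemma squeeze0:
  fixes x S :: "nat \<Rightarrow> real"
  assumes "\<And>n. 0 \<le> x n" "\<And>n. x n \<le> S n" "S \<longlonglongrightarrow> 0"
  shows "x \<longlonglongrightarrow> 0"
  by (rule tendsto_sandwich[of "\<lambda>_. 0" x sequentially S]) (use assms in auto)

lemma L2_restrict: assumes "L2 UNIV a" "S \<in> sets lebesgue" shows "L2 S a"
proof (rule L2I)
  have "a \<in> borel_measurable lebesgue" using L2_meas[OF assms(1)] by simp
  then show "(\<lambda>x. indicator S x * a x) \<in> borel_measurable lebesgue"
    by (rule borel_measurable_times[OF borel_measurable_indicator[OF assms(2)]])
  have "integrable lebesgue (\<lambda>x. indicator S x *\<^sub>R (indicator UNIV x * (a x)\<^sup>2))"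
    by (rule integrable_mult_indicator[OF assms(2) L2_sq_int[OF assms(1)]])
  then show "integrable lebesgue (\<lambda>x. indicator S x * (a x)\<^sup>2)" by simp
qed

lemma H1_L2: "H1 U a G \<Longrightarrow> L2 U a" "H1 U a G \<Longrightarrow> L2 U (\<lambda>x. G x $ i)"
  by (auto simp: H1_def)

lemma inner3: "(G::real^3) \<bullet> H = G$1*H$1 + G$2*H$2 + G$3*H$3"
  by (simp add: inner_vec_def sum_3)

lemma E_split:
  fixes G H :: "real^3 \<Rightarrow> real^3" and a b :: "real^3 \<Rightarrow> real"
  assumes "L2 U a" "L2 U b" "\<And>i. L2 U (\<lambda>x. G x $ i)" "\<And>i. L2 U (\<lambda>x. H x $ i)"
  shows "(LINT x:U|lebesgue. G x \<bullet> H x + t * a x * b x)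
    = P U (\<lambda>x. G x$1) (\<lambda>x. H x$1) + P U (\<lambda>x. G x$2) (\<lambda>x. H x$2) + P U (\<lambda>x. G x$3) (\<lambda>x. H x$3) + t * P U a b"
proof -
  have "(LINT x:U|lebesgue. G x \<bullet> H x + t * a x * b x) = integral\<^sup>L lebesgue (\<lambda>x.
      indicator U x * (G x$1 * H x$1) + indicator U x * (G x$2 * H x$2) + indicator U x * (G x$3 * H x$3)
       + t * (indicator U x * (a x * b x)))"
    unfolding LINT_ind inner3 by (simp add: algebra_simps)
  also have "\<dots> = P U (\<lambda>x. G x$1) (\<lambda>x. H x$1) + P U (\<lambda>x. G x$2) (\<lambda>x. H x$2) + P U (\<lambda>x. G x$3) (\<lambda>x. H x$3) + t * P U a b"
    unfolding P_def LINT_ind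
    using P_int[OF assms(3)[of 1] assms(4)[of 1]] P_int[OF assms(3)[of 2] assms(4)[of 2]]
      P_int[OF assms(3)[of 3] assms(4)[of 3]] P_int[OF assms(1,2)]
    by simp
  finally show ?thesis .
qed

lemma H10_split:
  fixes G H :: "real^3 \<Rightarrow> real^3" and a b :: "real^3 \<Rightarrow> real"
  assumes "L2 U a" "L2 U b" "\<And>i. L2 U (\<lambda>x. G x $ i)" "\<And>i. L2 U (\<lambda>x. H x $ i)"
  shows "(LINT x:U|lebesgue. (a x - b x)\<^sup>2 + (norm (G x - H x))\<^sup>2)
    = P U (\<lambda>x. a x - b x) (\<lambda>x. a x - b x) + P U (\<lambda>x. G x$1 - H x$1) (\<lambda>x. G x$1 - H x$1)
      + P U (\<lambda>x. G x$2 - H x$2) (\<lambda>x. G x$2 - H x$2) + P U (\<lambda>x. G x$3 - H x$3) (\<lambda>x. G x$3 - H x$3)"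
proof -
  have d: "L2 U (\<lambda>x. G x $ i - H x $ i)" for i using L2_diff[OF assms(3,4)] .
  have "(LINT x:U|lebesgue. (a x - b x)\<^sup>2 + (norm (G x - H x))\<^sup>2)
    = (LINT x:U|lebesgue. (\<chi> i. G x $ i - H x $ i) \<bullet> (\<chi> i. G x $ i - H x $ i) + 1 * (a x - b x) * (a x - b x))"
  proof -
    have "(\<chi> i. G x $ i - H x $ i) = G x - H x" for x by (simp add: vec_eq_iff)
    then show ?thesis by (simp only: power2_norm_eq_inner) (simp add: power2_eq_square add.commute)
  qed
  also have "\<dots> = P U (\<lambda>x. (\<chi> i. G x $ i - H x $ i)$1) (\<lambda>x. (\<chi> i. G x $ i - H x $ i)$1)
     + P U (\<lambda>x. (\<chi> i. G x $ i - H x $ i)$2) (\<lambda>x. (\<chi> i. G x $ i - H x $ i)$2)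
     + P U (\<lambda>x. (\<chi> i. G x $ i - H x $ i)$3) (\<lambda>x. (\<chi> i. G x $ i - H x $ i)$3)
     + 1 * P U (\<lambda>x. a x - b x) (\<lambda>x. a x - b x)"
    by (rule E_split[OF L2_diff[OF assms(1,2)] L2_diff[OF assms(1,2)]]) (use d in simp_all)
  finally show ?thesis by simp
qed

lemma K_lemma:
  fixes v h a :: "real^3 \<Rightarrow> real" and Gv Ga :: "real^3 \<Rightarrow> real^3"
  assumes hel: "helmholtz_R3 \<tau> h v Gv" and hL: "L2 \<Omega> h" and \<Omega>m: "\<Omega> \<in> sets lebesgue"
    and a: "H10 \<Omega> a Ga"
  shows "(LINT x:\<Omega>|lebesgue. Gv x \<bullet> Ga x + \<tau>\<^sup>2 * v x * a x) = P \<Omega> h a"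
proof -
  have aH: "H1 \<Omega> a Ga" using a by (simp add: H10_def)
  obtain \<psi> :: "nat \<Rightarrow> real^3 \<Rightarrow> real" where tf: "\<And>n. test_fun \<Omega> (\<psi> n)"
    and conv: "(\<lambda>n. LINT x:\<Omega>|lebesgue. (a x - \<psi> n x)\<^sup>2 + (norm (Ga x - grad (\<psi> n) x))\<^sup>2) \<longlonglongrightarrow> 0"
    using a by (auto simp: H10_def)
  have vH: "H1 UNIV v Gv" using hel by (simp add: helmholtz_R3_def)
  have vL: "L2 \<Omega> v" "\<And>i. L2 \<Omega> (\<lambda>x. Gv x $ i)"
    using L2_restrict[OF H1_L2(1)[OF vH] \<Omega>m] L2_restrict[OF H1_L2(2)[OF vH] \<Omega>m] by auto
  have aL: "L2 \<Omega> a" "\<And>i. L2 \<Omega> (\<lambda>x. Ga x $ i)" using H1_L2[OF aH] by auto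
  have \<psi>H: "H1 UNIV (\<psi> n) (grad (\<psi> n))" for n by (rule test_H1[OF tf])
  have \<psi>L: "L2 \<Omega> (\<psi> n)" "\<And>i. L2 \<Omega> (\<lambda>x. grad (\<psi> n) x $ i)" for n
    using L2_restrict[OF H1_L2(1)[OF \<psi>H] \<Omega>m] L2_restrict[OF H1_L2(2)[OF \<psi>H] \<Omega>m] by auto
  have idn: "P \<Omega> (\<lambda>x. Gv x$1) (\<lambda>x. grad (\<psi> n) x$1) + P \<Omega> (\<lambda>x. Gv x$2) (\<lambda>x. grad (\<psi> n) x$2)
      + P \<Omega> (\<lambda>x. Gv x$3) (\<lambda>x. grad (\<psi> n) x$3) + \<tau>\<^sup>2 * P \<Omega> v (\<psi> n) = P \<Omega> h (\<psi> n)" for n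
  proof -
    have "(LINT x|lebesgue. Gv x \<bullet> grad (\<psi> n) x + \<tau>\<^sup>2 * v x * \<psi> n x) = (LINT x|lebesgue. h x * \<psi> n x)"
      using hel \<psi>H[of n] by (simp add: helmholtz_R3_def)
    moreover have "(LINT x|lebesgue. Gv x \<bullet> grad (\<psi> n) x + \<tau>\<^sup>2 * v x * \<psi> n x)
        = (LINT x:\<Omega>|lebesgue. Gv x \<bullet> grad (\<psi> n) x + \<tau>\<^sup>2 * v x * \<psi> n x)"
      by (rule LINT_UNIV_restrict) (simp add: test_zero_out[OF tf])
    moreover have "(LINT x|lebesgue. h x * \<psi> n x) = P \<Omega> h (\<psi> n)"
      unfolding P_def by (rule LINT_UNIV_restrict) (simp add: test_zero_out[OF tf])
    moreover have "(LINT x:\<Omega>|lebesgue. Gv x \<bullet> grad (\<psi> n) x + \<tau>\<^sup>2 * v x * \<psi> n x)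
       = P \<Omega> (\<lambda>x. Gv x$1) (\<lambda>x. grad (\<psi> n) x$1) + P \<Omega> (\<lambda>x. Gv x$2) (\<lambda>x. grad (\<psi> n) x$2)
      + P \<Omega> (\<lambda>x. Gv x$3) (\<lambda>x. grad (\<psi> n) x$3) + \<tau>\<^sup>2 * P \<Omega> v (\<psi> n)"
      by (rule E_split[OF vL(1) \<psi>L(1) vL(2) \<psi>L(2)])
    ultimately show ?thesis by simp
  qed
  define S where "S n = (LINT x:\<Omega>|lebesgue. (a x - \<psi> n x)\<^sup>2 + (norm (Ga x - grad (\<psi> n) x))\<^sup>2)" for n
  have Sdec: "S n = P \<Omega> (\<lambda>x. a x - \<psi> n x) (\<lambda>x. a x - \<psi> n x) + P \<Omega> (\<lambda>x. Ga x$1 - grad (\<psi> n) x$1) (\<lambda>x. Ga x$1 - grad (\<psi> n) x$1)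
      + P \<Omega> (\<lambda>x. Ga x$2 - grad (\<psi> n) x$2) (\<lambda>x. Ga x$2 - grad (\<psi> n) x$2) + P \<Omega> (\<lambda>x. Ga x$3 - grad (\<psi> n) x$3) (\<lambda>x. Ga x$3 - grad (\<psi> n) x$3)" for n
    unfolding S_def by (rule H10_split[OF aL(1) \<psi>L(1) aL(2) \<psi>L(2)])
  have S0: "S \<longlonglongrightarrow> 0" using conv unfolding S_def[abs_def] .
  have sym: "P \<Omega> (\<lambda>x. p x - q x) (\<lambda>x. p x - q x) = P \<Omega> (\<lambda>x. q x - p x) (\<lambda>x. q x - p x)" for p q :: "real^3 \<Rightarrow> real"
    unfolding P_def by (simp add: algebra_simps)
  have c0: "(\<lambda>n. P \<Omega> (\<lambda>x. \<psi> n x - a x) (\<lambda>x. \<psi> n x - a x)) \<longlonglongrightarrow> 0"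
    by (rule squeeze0[OF P_nonneg _ S0]) (simp add: Sdec sym[of "\<psi> _"] P_nonneg add_increasing2)
  have ci: "(\<lambda>n. P \<Omega> (\<lambda>x. grad (\<psi> n) x$i - Ga x$i) (\<lambda>x. grad (\<psi> n) x$i - Ga x$i)) \<longlonglongrightarrow> 0" for i
  proof (rule squeeze0[OF P_nonneg _ S0])
    fix n
    have nn: "0 \<le> P \<Omega> (\<lambda>x. a x - \<psi> n x) (\<lambda>x. a x - \<psi> n x)" "0 \<le> P \<Omega> (\<lambda>x. Ga x$1 - grad (\<psi> n) x$1) (\<lambda>x. Ga x$1 - grad (\<psi> n) x$1)" "0 \<le> P \<Omega> (\<lambda>x. Ga x$2 - grad (\<psi> n) x$2) (\<lambda>x. Ga x$2 - grad (\<psi> n) x$2)" "0 \<le> P \<Omega> (\<lambda>x. Ga x$3 - grad (\<psi> n) x$3) (\<lambda>x. Ga x$3 - grad (\<psi> n) x$3)"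
      by (rule P_nonneg)+
    have e: "P \<Omega> (\<lambda>x. grad (\<psi> n) x$i - Ga x$i) (\<lambda>x. grad (\<psi> n) x$i - Ga x$i) = P \<Omega> (\<lambda>x. Ga x$i - grad (\<psi> n) x$i) (\<lambda>x. Ga x$i - grad (\<psi> n) x$i)"
      by (rule sym)
    have "i = 1 \<or> i = 2 \<or> i = 3" by (rule exhaust_3)
    then show "P \<Omega> (\<lambda>x. grad (\<psi> n) x$i - Ga x$i) (\<lambda>x. grad (\<psi> n) x$i - Ga x$i) \<le> S n"
    proof (elim disjE)
      assume i: "i = 1"
      have "P \<Omega> (\<lambda>x. grad (\<psi> n) x$i - Ga x$i) (\<lambda>x. grad (\<psi> n) x$i - Ga x$i) = P \<Omega> (\<lambda>x. Ga x$1 - grad (\<psi> n) x$1) (\<lambda>x. Ga x$1 - grad (\<psi> n) x$1)"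
        using e unfolding i .
      with nn Sdec[of n] show ?thesis by linarith
    next
      assume i: "i = 2"
      have "P \<Omega> (\<lambda>x. grad (\<psi> n) x$i - Ga x$i) (\<lambda>x. grad (\<psi> n) x$i - Ga x$i) = P \<Omega> (\<lambda>x. Ga x$2 - grad (\<psi> n) x$2) (\<lambda>x. Ga x$2 - grad (\<psi> n) x$2)"
        using e unfolding i .
      with nn Sdec[of n] show ?thesis by linarith
    next
      assume i: "i = 3"
      have "P \<Omega> (\<lambda>x. grad (\<psi> n) x$i - Ga x$i) (\<lambda>x. grad (\<psi> n) x$i - Ga x$i) = P \<Omega> (\<lambda>x. Ga x$3 - grad (\<psi> n) x$3) (\<lambda>x. Ga x$3 - grad (\<psi> n) x$3)"
        using e unfolding i .
      with nn Sdec[of n] show ?thesis by linarith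
    qed
  qed
  have l1: "(\<lambda>n. P \<Omega> (\<lambda>x. Gv x$i) (\<lambda>x. grad (\<psi> n) x$i)) \<longlonglongrightarrow> P \<Omega> (\<lambda>x. Gv x$i) (\<lambda>x. Ga x$i)" for i
    by (rule P_lim[OF vL(2) \<psi>L(2) aL(2) ci])
  have l2: "(\<lambda>n. P \<Omega> v (\<psi> n)) \<longlonglongrightarrow> P \<Omega> v a"
    by (rule P_lim[OF vL(1) \<psi>L(1) aL(1) c0])
  have l3: "(\<lambda>n. P \<Omega> h (\<psi> n)) \<longlonglongrightarrow> P \<Omega> h a"
    by (rule P_lim[OF hL \<psi>L(1) aL(1) c0])
  have "(\<lambda>n. P \<Omega> (\<lambda>x. Gv x$1) (\<lambda>x. grad (\<psi> n) x$1) + P \<Omega> (\<lambda>x. Gv x$2) (\<lambda>x. grad (\<psi> n) x$2)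
      + P \<Omega> (\<lambda>x. Gv x$3) (\<lambda>x. grad (\<psi> n) x$3) + \<tau>\<^sup>2 * P \<Omega> v (\<psi> n)) \<longlonglongrightarrow>
      P \<Omega> (\<lambda>x. Gv x$1) (\<lambda>x. Ga x$1) + P \<Omega> (\<lambda>x. Gv x$2) (\<lambda>x. Ga x$2)
      + P \<Omega> (\<lambda>x. Gv x$3) (\<lambda>x. Ga x$3) + \<tau>\<^sup>2 * P \<Omega> v a"
    by (intro tendsto_intros l1 l2)
  then have "(\<lambda>n. P \<Omega> h (\<psi> n)) \<longlonglongrightarrow>
      P \<Omega> (\<lambda>x. Gv x$1) (\<lambda>x. Ga x$1) + P \<Omega> (\<lambda>x. Gv x$2) (\<lambda>x. Ga x$2)
      + P \<Omega> (\<lambda>x. Gv x$3) (\<lambda>x. Ga x$3) + \<tau>\<^sup>2 * P \<Omega> v a"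
    unfolding idn .
  with l3 have "P \<Omega> h a = P \<Omega> (\<lambda>x. Gv x$1) (\<lambda>x. Ga x$1) + P \<Omega> (\<lambda>x. Gv x$2) (\<lambda>x. Ga x$2)
      + P \<Omega> (\<lambda>x. Gv x$3) (\<lambda>x. Ga x$3) + \<tau>\<^sup>2 * P \<Omega> v a"
    using LIMSEQ_unique by blast
  also have "\<dots> = (LINT x:\<Omega>|lebesgue. Gv x \<bullet> Ga x + \<tau>\<^sup>2 * v x * a x)"
    by (rule E_split[OF vL(1) aL(1) vL(2) aL(2), symmetric])
  finally show ?thesis by simp
qed

lemma vec2_axis: "(vector [a, b] :: real^2) = a *\<^sub>R axis 1 1 + b *\<^sub>R axis 2 1"
  by (simp add: vec_eq_iff forall_2 axis_def)

lemma vec3_axis: "(z :: real^3) = z$1 *\<^sub>R axis 1 1 + z$2 *\<^sub>R axis 2 1 + z$3 *\<^sub>R axis 3 1"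
  by (simp add: vec_eq_iff forall_3 axis_def)

lemma frontier_local:
  fixes D :: "(real^3) set" and \<phi> :: "real^2 \<Rightarrow> real" and R :: "real^3 \<Rightarrow> real^3"
  assumes oD: "open D" and oR: "orthogonal_transformation R" and c\<phi>: "continuous_on UNIV \<phi>"
    and eq: "D \<inter> ball p r = {x \<in> ball p r. R (x - p) $ 3 < \<phi> (vector [R (x - p) $ 1, R (x - p) $ 2])}"
  shows "frontier D \<inter> ball p r \<subseteq> (\<lambda>y. p + inv R (y$1 *\<^sub>R axis 1 1 + y$2 *\<^sub>R axis 2 1 + \<phi> y *\<^sub>R axis 3 1)) ` UNIV"
proof
  fix x assume x: "x \<in> frontier D \<inter> ball p r"
  define z where "z = R (x - p)"
  define y :: "real^2" where "y = vector [z$1, z$2]"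
  have xD: "x \<notin> D" using x oD by (simp add: frontier_def interior_open)
  have xcl: "x \<in> closure D" using x by (simp add: frontier_def)
  have lin: "linear R" using oR by (rule orthogonal_transformation_linear)
  have cR: "continuous_on UNIV R" using lin by (simp add: linear_continuous_on linear_conv_bounded_linear)
  have cf: "continuous_on UNIV (\<lambda>x'. \<phi> (vector [R (x' - p) $ 1, R (x' - p) $ 2]))"
    unfolding vec2_axis
    by (intro continuous_on_compose2[OF c\<phi>] continuous_intros continuous_on_compose2[OF cR]) auto
  have c3: "continuous_on UNIV (\<lambda>x'. R (x' - p) $ 3)"
    by (intro continuous_intros continuous_on_compose2[OF cR]) auto
  have "z$3 = \<phi> y"
  proof (rule ccontr)
    assume ne: "z$3 \<noteq> \<phi> y"
    show False
    proof (cases "z$3 < \<phi> y")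
      case True
      then have "x \<in> D \<inter> ball p r" unfolding eq using x by (simp add: z_def y_def)
      then show False using xD by simp
    next
      case False
      with ne have gt: "\<phi> y < z$3" by simp
      define V where "V = ball p r \<inter> {x'. \<phi> (vector [R (x' - p) $ 1, R (x' - p) $ 2]) < R (x' - p) $ 3}"
      have oV: "open V" unfolding V_def by (intro open_Int open_ball open_Collect_less cf c3)
      have xV: "x \<in> V" using x gt by (simp add: V_def z_def y_def)
      have "V \<inter> D = {}"
      proof (rule ccontr)
        assume "V \<inter> D \<noteq> {}"
        then obtain x' where "x' \<in> V" "x' \<in> D" by blast
        then have "x' \<in> D \<inter> ball p r" by (simp add: V_def)
        then have "R (x' - p) $ 3 < \<phi> (vector [R (x' - p) $ 1, R (x' - p) $ 2])" unfolding eq by simp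
        with \<open>x' \<in> V\<close> show False by (simp add: V_def)
      qed
      then have "V \<inter> closure D = {}" using oV by (simp add: open_Int_closure_eq_empty)
      then show False using xV xcl by blast
    qed
  qed
  then have "z = y$1 *\<^sub>R axis 1 1 + y$2 *\<^sub>R axis 2 1 + \<phi> y *\<^sub>R axis 3 1"
    using vec3_axis[of z] by (simp add: y_def)
  moreover have "x = p + inv R z"
    using inv_f_f[OF orthogonal_transformation_inj[OF oR]] by (simp add: z_def)
  ultimately show "x \<in> (\<lambda>y. p + inv R (y$1 *\<^sub>R axis 1 1 + y$2 *\<^sub>R axis 2 1 + \<phi> y *\<^sub>R axis 3 1)) ` UNIV"
    by auto
qed

lemma graph_negligible:
  fixes \<phi> :: "real^2 \<Rightarrow> real" and R :: "real^3 \<Rightarrow> real^3"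
  assumes oR: "orthogonal_transformation R" and d\<phi>: "\<phi> differentiable_on UNIV"
  shows "negligible ((\<lambda>y. p + inv R (y$1 *\<^sub>R axis 1 1 + y$2 *\<^sub>R axis 2 1 + \<phi> y *\<^sub>R axis 3 1)) ` UNIV)"
proof (rule negligible_differentiable_image_lowdim)
  show "DIM(real^2) < DIM(real^3)" by simp
  have lin: "linear (inv R)" using orthogonal_transformation_inv[OF oR] by (rule orthogonal_transformation_linear)
  have dI: "inv R differentiable at w" for w
    using lin by (simp add: linear_imp_differentiable linear_conv_bounded_linear)
  have dc: "(\<lambda>y::real^2. y $ k) differentiable at w" for k w
    by (simp add: bounded_linear_imp_differentiable bounded_linear_vec_nth)
  show "(\<lambda>y. p + inv R (y$1 *\<^sub>R axis 1 1 + y$2 *\<^sub>R axis 2 1 + \<phi> y *\<^sub>R axis 3 1)) differentiable_on UNIV"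
    unfolding differentiable_on_def
  proof
    fix w :: "real^2"
    have "(\<lambda>y. y$1 *\<^sub>R axis 1 1 + y$2 *\<^sub>R axis 2 1 + \<phi> y *\<^sub>R (axis 3 1 :: real^3)) differentiable at w"
      using d\<phi> dc by (auto simp: differentiable_on_def intro!: differentiable_compose derivative_intros)
    then have "(\<lambda>y. inv R (y$1 *\<^sub>R axis 1 1 + y$2 *\<^sub>R axis 2 1 + \<phi> y *\<^sub>R axis 3 1)) differentiable at w"
      using differentiable_chain_at[OF _ dI] by (simp add: o_def)
    then show "(\<lambda>y. p + inv R (y$1 *\<^sub>R axis 1 1 + y$2 *\<^sub>R axis 2 1 + \<phi> y *\<^sub>R axis 3 1)) differentiable at w within UNIV"
      by (auto intro!: derivative_intros)
  qed
qed

lemma frontier_negligible: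
  fixes D :: "(real^3) set"
  assumes bD: "bounded D" and oD: "open D" and C2: "C2_boundary D"
  shows "negligible (frontier D)"
proof -
  have loc: "\<exists>r>0. \<exists>N. negligible N \<and> frontier D \<inter> ball p r \<subseteq> N" if p: "p \<in> frontier D" for p
  proof -
    obtain r and R :: "real^3 \<Rightarrow> real^3" and \<phi> :: "real^2 \<Rightarrow> real" where r: "r > 0" and oR: "orthogonal_transformation R"
      and c: "Ck 2 \<phi>"
      and eq: "D \<inter> ball p r = {x \<in> ball p r. R (x - p) $ 3 < \<phi> (vector [R (x - p) $ 1, R (x - p) $ 2])}"
      using C2 p unfolding C2_boundary_def by blast
    have "Ck (Suc (Suc 0)) \<phi>" using c by (simp add: numeral_2_eq_2)
    then have d: "\<phi> differentiable_on UNIV" and co: "continuous_on UNIV \<phi>" by auto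
    show ?thesis
      using r frontier_local[OF oD oR co eq] graph_negligible[OF oR d, of p] by blast
  qed
  then obtain rr where rr: "\<And>p. p \<in> frontier D \<Longrightarrow> rr p > 0 \<and> (\<exists>N. negligible N \<and> frontier D \<inter> ball p (rr p) \<subseteq> N)"
    by metis
  then obtain NN where NN: "\<And>p. p \<in> frontier D \<Longrightarrow> negligible (NN p) \<and> frontier D \<inter> ball p (rr p) \<subseteq> NN p"
    by metis
  have cf: "compact (frontier D)" using bD by (simp add: compact_frontier_bounded)
  have cov: "frontier D \<subseteq> (\<Union>p\<in>frontier D. ball p (rr p))"
    using rr by force
  obtain C' where C': "C' \<subseteq> frontier D" "finite C'" "frontier D \<subseteq> (\<Union>p\<in>C'. ball p (rr p))"
    using compactE_image[OF cf _ cov] by blast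
  have "frontier D \<subseteq> \<Union> (NN ` C')"
    using C' NN by blast
  moreover have "negligible (\<Union> (NN ` C'))"
    using C' NN by (intro negligible_Union) auto
  ultimately show ?thesis using negligible_subset by blast
qed

lemma ode_part:
  fixes p Pd q :: "real \<Rightarrow> real"
  assumes T: "0 \<le> T"
    and dp: "\<And>t. t \<in> {0..T} \<Longrightarrow> (p has_real_derivative Pd t) (at t within {0..T})"
    and cq: "continuous_on {0..T} q"
    and eqP: "\<And>t. t \<in> {0..T} \<Longrightarrow> Pd t = Pd 0 - integral {0..t} (\<lambda>s. q s - \<tau>\<^sup>2 * p s)"
  shows "((\<lambda>t. exp (- \<tau> * t) * q t) has_integral
           (Pd 0 + \<tau> * p 0 - exp (- \<tau> * T) * (Pd T + \<tau> * p T))) {0..T}"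
proof -
  define h where "h s = q s - \<tau>\<^sup>2 * p s" for s
  have cp: "continuous_on {0..T} p"
    unfolding continuous_on_eq_continuous_within
    using dp has_field_derivative_imp_has_derivative has_derivative_continuous by blast
  have ch: "continuous_on {0..T} h" unfolding h_def using cq cp by (intro continuous_intros)
  have dPd: "(Pd has_real_derivative - h t) (at t within {0..T})" if t: "t \<in> {0..T}" for t
  proof -
    have "((\<lambda>u. integral {0..u} h) has_vector_derivative h t) (at t within {0..T})"
      by (rule integral_has_vector_derivative[OF ch t])
    then have "((\<lambda>u. integral {0..u} h) has_real_derivative h t) (at t within {0..T})"
      by (simp add: has_real_derivative_iff_has_vector_derivative)
    then have "((\<lambda>u. Pd 0 - integral {0..u} h) has_real_derivative 0 - h t) (at t within {0..T})"
      by (intro DERIV_diff DERIV_const)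
    then have "((\<lambda>u. Pd 0 - integral {0..u} h) has_real_derivative - h t) (at t within {0..T})" by simp
    then show ?thesis
    proof (rule has_field_derivative_transform_within[where d=1])
      show "Pd 0 - integral {0..x} h = Pd x" if "x \<in> {0..T}" "dist x t < 1" for x
        using eqP[OF that(1)] unfolding h_def[abs_def] by simp
    qed (use t in auto)
  qed
  define \<Phi> where "\<Phi> t = exp (- \<tau> * t) * (Pd t + \<tau> * p t)" for t
  have d\<Phi>: "(\<Phi> has_vector_derivative (- (exp (- \<tau> * t) * q t))) (at t within {0..T})" if t: "t \<in> {0..T}" for t
  proof -
    have e: "((\<lambda>t. exp (- \<tau> * t)) has_real_derivative exp (- \<tau> * t) * (- \<tau>)) (at t within {0..T})"
      using DERIV_chain2[OF DERIV_exp DERIV_cmult[OF DERIV_ident, of "- \<tau>"]] 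
      by (simp add: has_field_derivative_at_within)
    have s: "((\<lambda>t. Pd t + \<tau> * p t) has_real_derivative (- h t + \<tau> * Pd t)) (at t within {0..T})"
      by (intro DERIV_add DERIV_cmult dPd[OF t] dp[OF t])
    have "(\<Phi> has_real_derivative (exp (- \<tau> * t) * (- \<tau>) * (Pd t + \<tau> * p t) + (- h t + \<tau> * Pd t) * exp (- \<tau> * t)))
        (at t within {0..T})"
      unfolding \<Phi>_def by (rule DERIV_mult[OF e s])
    moreover have "exp (- \<tau> * t) * (- \<tau>) * (Pd t + \<tau> * p t) + (- h t + \<tau> * Pd t) * exp (- \<tau> * t)
        = - (exp (- \<tau> * t) * q t)"
      by (simp add: h_def algebra_simps power2_eq_square)
    ultimately show ?thesis by (simp add: has_real_derivative_iff_has_vector_derivative)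
  qed
  have "((\<lambda>t. - (exp (- \<tau> * t) * q t)) has_integral (\<Phi> T - \<Phi> 0)) {0..T}"
    by (rule fundamental_theorem_of_calculus[OF T d\<Phi>])
  from has_integral_neg[OF this]
  show ?thesis by (simp add: \<Phi>_def)
qed

lemma wave_facts:
  assumes "wave_sol \<Omega> T f u Gu ut"
  shows "\<And>t. t \<in> {0..T} \<Longrightarrow> H10 \<Omega> (\<lambda>x. u x t) (\<lambda>x. Gu x t)"
    "\<And>t. t \<in> {0..T} \<Longrightarrow> L2 \<Omega> (\<lambda>x. ut x t)"
    "\<And>t. t \<in> {0..T} \<Longrightarrow> ((\<lambda>s. LINT x:\<Omega>|lebesgue. (u x s - u x t)\<^sup>2 + (norm (Gu x s - Gu x t))\<^sup>2) \<longlongrightarrow> 0)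
                    (at t within {0..T})"
    "\<And>t. t \<in> {0..T} \<Longrightarrow> ((\<lambda>s. LINT x:\<Omega>|lebesgue. ((u x s - u x t) / (s - t) - ut x t)\<^sup>2) \<longlongrightarrow> 0)
                    (at t within {0..T})"
    "\<And>\<phi> G\<phi> t. H10 \<Omega> \<phi> G\<phi> \<Longrightarrow> t \<in> {0..T} \<Longrightarrow>
        (LINT x:\<Omega>|lebesgue. ut x t * \<phi> x) - (LINT x:\<Omega>|lebesgue. ut x 0 * \<phi> x)
          = - integral {0..t} (\<lambda>s. LINT x:\<Omega>|lebesgue. Gu x s \<bullet> G\<phi> x)"
    "(LINT x:\<Omega>|lebesgue. (u x 0)\<^sup>2) = 0"
    "(LINT x:\<Omega>|lebesgue. (ut x 0 - f x)\<^sup>2) = 0"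
  using assms unfolding wave_sol_def by blast+

lemma P_lin3:
  assumes "L2 U \<phi>" "L2 U a" "L2 U b" "L2 U c"
  shows "P U \<phi> (\<lambda>x. (a x - b x) / d - c x) = (P U \<phi> a - P U \<phi> b) / d - P U \<phi> c"
proof -
  have ab: "L2 U (\<lambda>x. a x - b x)" by (rule L2_diff[OF assms(2,3)])
  have e: "(\<lambda>x. (a x - b x) / d - c x) = (\<lambda>x. (1/d) * (a x - b x) - c x)" by (simp add: field_simps)
  have "P U \<phi> (\<lambda>x. (1/d) * (a x - b x) - c x) = P U \<phi> (\<lambda>x. (1/d) * (a x - b x)) - P U \<phi> c"
    by (rule P_diff2[OF assms(1) L2_scale[OF ab] assms(4)])
  also have "\<dots> = (1/d) * (P U \<phi> a - P U \<phi> b) - P U \<phi> c"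
    using P_scale2[of U \<phi> "1/d" "\<lambda>x. a x - b x"] P_diff2[OF assms(1,2,3)] by simp
  finally show ?thesis unfolding e by simp
qed

lemma ev_within: "(\<And>s. s \<in> S \<Longrightarrow> Q s) \<Longrightarrow> eventually Q (at t within S)"
  unfolding eventually_at_filter by (auto intro!: always_eventually)

lemma P_sq: "P U g g = (LINT x:U|lebesgue. (g x)\<^sup>2)"
  by (simp add: P_def power2_eq_square)

lemma time_deriv:
  assumes w: "wave_sol \<Omega> T f u Gu ut" and \<phi>: "L2 \<Omega> \<phi>" and t: "t \<in> {0..T}"
  shows "((\<lambda>s. P \<Omega> (\<lambda>x. u x s) \<phi>) has_real_derivative P \<Omega> (\<lambda>x. ut x t) \<phi>) (at t within {0..T})"
proof -
  note W = wave_facts[OF w]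
  have uL: "L2 \<Omega> (\<lambda>x. u x s)" if "s \<in> {0..T}" for s
    using W(1)[OF that] by (simp add: H10_def H1_def)
  define dq where "dq s x = (u x s - u x t) / (s - t) - ut x t" for s x
  define B where "B s = sqrt (P \<Omega> \<phi> \<phi>) * sqrt (P \<Omega> (dq s) (dq s))" for s
  have lq: "((\<lambda>s. P \<Omega> (dq s) (dq s)) \<longlongrightarrow> 0) (at t within {0..T})"
    using W(4)[OF t] unfolding P_sq dq_def .
  have "(B \<longlongrightarrow> sqrt (P \<Omega> \<phi> \<phi>) * sqrt 0) (at t within {0..T})"
    unfolding B_def by (intro tendsto_intros lq)
  then have B0: "(B \<longlongrightarrow> 0) (at t within {0..T})" by simp
  have bnd: "\<bar>(P \<Omega> (\<lambda>x. u x s) \<phi> - P \<Omega> (\<lambda>x. u x t) \<phi>) / (s - t) - P \<Omega> (\<lambda>x. ut x t) \<phi>\<bar> \<le> B s"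
    if s: "s \<in> {0..T}" for s
  proof -
    have "(P \<Omega> (\<lambda>x. u x s) \<phi> - P \<Omega> (\<lambda>x. u x t) \<phi>) / (s - t) - P \<Omega> (\<lambda>x. ut x t) \<phi> = P \<Omega> \<phi> (dq s)"
      unfolding dq_def using P_lin3[OF \<phi> uL[OF s] uL[OF t] W(2)[OF t], of "s - t"]
      by (simp add: P_sym)
    also have "\<bar>\<dots>\<bar> \<le> B s" unfolding B_def
    proof (rule P_CS[OF \<phi>])
      have "L2 \<Omega> (\<lambda>x. (1 / (s - t)) * (u x s - u x t) - ut x t)"
        by (intro L2_diff L2_scale uL s t W(2)[OF t])
      moreover have "(\<lambda>x. (1 / (s - t)) * (u x s - u x t) - ut x t) = dq s"
        by (simp add: dq_def fun_eq_iff)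
      ultimately show "L2 \<Omega> (dq s)" by simp
    qed
    finally show ?thesis .
  qed
  have "((\<lambda>s. (P \<Omega> (\<lambda>x. u x s) \<phi> - P \<Omega> (\<lambda>x. u x t) \<phi>) / (s - t) - P \<Omega> (\<lambda>x. ut x t) \<phi>) \<longlongrightarrow> 0)
      (at t within {0..T})"
  proof (rule tendsto_sandwich[OF _ _ tendsto_minus[OF B0, simplified] B0])
    show "\<forall>\<^sub>F s in at t within {0..T}. - B s \<le> (P \<Omega> (\<lambda>x. u x s) \<phi> - P \<Omega> (\<lambda>x. u x t) \<phi>) / (s - t) - P \<Omega> (\<lambda>x. ut x t) \<phi>"
    proof (rule ev_within)
      fix s assume "s \<in> {0..T}" then show "- B s \<le> (P \<Omega> (\<lambda>x. u x s) \<phi> - P \<Omega> (\<lambda>x. u x t) \<phi>) / (s - t) - P \<Omega> (\<lambda>x. ut x t) \<phi>"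
        using bnd[of s] by (simp add: abs_le_iff)
    qed
    show "\<forall>\<^sub>F s in at t within {0..T}. (P \<Omega> (\<lambda>x. u x s) \<phi> - P \<Omega> (\<lambda>x. u x t) \<phi>) / (s - t) - P \<Omega> (\<lambda>x. ut x t) \<phi> \<le> B s"
    proof (rule ev_within)
      fix s assume "s \<in> {0..T}" then show "(P \<Omega> (\<lambda>x. u x s) \<phi> - P \<Omega> (\<lambda>x. u x t) \<phi>) / (s - t) - P \<Omega> (\<lambda>x. ut x t) \<phi> \<le> B s"
        using bnd[of s] by (simp add: abs_le_iff)
    qed
  qed
  then show ?thesis
    by (simp add: has_field_derivative_iff LIM_zero_iff)
qed

lemma time_diff_lim:
  assumes w: "wave_sol \<Omega> T f u Gu ut" and t: "t \<in> {0..T}"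
  shows "((\<lambda>s. P \<Omega> (\<lambda>x. u x s - u x t) (\<lambda>x. u x s - u x t)) \<longlongrightarrow> 0) (at t within {0..T})"
proof -
  note W = wave_facts[OF w]
  have uH: "H1 \<Omega> (\<lambda>x. u x s) (\<lambda>x. Gu x s)" if "s \<in> {0..T}" for s
    using W(1)[OF that] by (simp add: H10_def)
  have b: "0 \<le> P \<Omega> (\<lambda>x. u x s - u x t) (\<lambda>x. u x s - u x t)
     \<and> P \<Omega> (\<lambda>x. u x s - u x t) (\<lambda>x. u x s - u x t) \<le> (LINT x:\<Omega>|lebesgue. (u x s - u x t)\<^sup>2 + (norm (Gu x s - Gu x t))\<^sup>2)"
    if s: "s \<in> {0..T}" for s
    using H10_split[OF H1_L2(1)[OF uH[OF s]] H1_L2(1)[OF uH[OF t]] H1_L2(2)[OF uH[OF s]] H1_L2(2)[OF uH[OF t]]]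
      P_nonneg[of \<Omega> "\<lambda>x. Gu x s $ 1 - Gu x t $ 1"] P_nonneg[of \<Omega> "\<lambda>x. Gu x s $ 2 - Gu x t $ 2"]
      P_nonneg[of \<Omega> "\<lambda>x. Gu x s $ 3 - Gu x t $ 3"] P_nonneg[of \<Omega> "\<lambda>x. u x s - u x t"]
    by linarith
  show ?thesis
  proof (rule tendsto_sandwich[OF _ _ tendsto_const W(3)[OF t]])
    show "\<forall>\<^sub>F s in at t within {0..T}. 0 \<le> P \<Omega> (\<lambda>x. u x s - u x t) (\<lambda>x. u x s - u x t)"
      using b by (intro ev_within) blast
    show "\<forall>\<^sub>F s in at t within {0..T}. P \<Omega> (\<lambda>x. u x s - u x t) (\<lambda>x. u x s - u x t)
        \<le> (LINT x:\<Omega>|lebesgue. (u x s - u x t)\<^sup>2 + (norm (Gu x s - Gu x t))\<^sup>2)"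
      using b by (intro ev_within) blast
  qed
qed

lemma time_cont:
  assumes w: "wave_sol \<Omega> T f u Gu ut" and \<psi>: "L2 \<Omega> \<psi>" and t: "t \<in> {0..T}"
  shows "((\<lambda>s. P \<Omega> (\<lambda>x. u x s) \<psi>) \<longlongrightarrow> P \<Omega> (\<lambda>x. u x t) \<psi>) (at t within {0..T})"
proof -
  note W = wave_facts[OF w]
  have uL: "L2 \<Omega> (\<lambda>x. u x s)" if "s \<in> {0..T}" for s
    using W(1)[OF that] by (simp add: H10_def H1_def)
  define B where "B s = sqrt (P \<Omega> \<psi> \<psi>) * sqrt (P \<Omega> (\<lambda>x. u x s - u x t) (\<lambda>x. u x s - u x t))" for s
  have "(B \<longlongrightarrow> sqrt (P \<Omega> \<psi> \<psi>) * sqrt 0) (at t within {0..T})"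
    unfolding B_def by (intro tendsto_intros time_diff_lim[OF w t])
  then have B0: "(B \<longlongrightarrow> 0) (at t within {0..T})" by simp
  have bnd: "\<bar>P \<Omega> (\<lambda>x. u x s) \<psi> - P \<Omega> (\<lambda>x. u x t) \<psi>\<bar> \<le> B s" if s: "s \<in> {0..T}" for s
  proof -
    have "P \<Omega> (\<lambda>x. u x s) \<psi> - P \<Omega> (\<lambda>x. u x t) \<psi> = P \<Omega> \<psi> (\<lambda>x. u x s - u x t)"
      using P_diff2[OF \<psi> uL[OF s] uL[OF t]] by (simp add: P_sym)
    also have "\<bar>\<dots>\<bar> \<le> B s" unfolding B_def
      by (rule P_CS[OF \<psi> L2_diff[OF uL[OF s] uL[OF t]]])
    finally show ?thesis .
  qed
  have "((\<lambda>s. P \<Omega> (\<lambda>x. u x s) \<psi> - P \<Omega> (\<lambda>x. u x t) \<psi>) \<longlongrightarrow> 0) (at t within {0..T})"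
  proof (rule tendsto_sandwich[OF _ _ tendsto_minus[OF B0, simplified] B0])
    show "\<forall>\<^sub>F s in at t within {0..T}. - B s \<le> P \<Omega> (\<lambda>x. u x s) \<psi> - P \<Omega> (\<lambda>x. u x t) \<psi>"
    proof (rule ev_within)
      fix s assume "s \<in> {0..T}" then show "- B s \<le> P \<Omega> (\<lambda>x. u x s) \<psi> - P \<Omega> (\<lambda>x. u x t) \<psi>"
        using bnd[of s] by (simp add: abs_le_iff)
    qed
    show "\<forall>\<^sub>F s in at t within {0..T}. P \<Omega> (\<lambda>x. u x s) \<psi> - P \<Omega> (\<lambda>x. u x t) \<psi> \<le> B s"
    proof (rule ev_within)
      fix s assume "s \<in> {0..T}" then show "P \<Omega> (\<lambda>x. u x s) \<psi> - P \<Omega> (\<lambda>x. u x t) \<psi> \<le> B s"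
        using bnd[of s] by (simp add: abs_le_iff)
    qed
  qed
  then show ?thesis by (simp add: LIM_zero_iff)
qed

lemma time_cont_on:
  assumes w: "wave_sol \<Omega> T f u Gu ut" and \<psi>: "L2 \<Omega> \<psi>"
  shows "continuous_on {0..T} (\<lambda>s. P \<Omega> (\<lambda>x. u x s) \<psi>)"
  unfolding continuous_on_def using time_cont[OF w \<psi>] by blast

lemma P_sq_bound:
  assumes a: "L2 U a" and b: "L2 U b"
  shows "P U a a \<le> 2 * P U b b + 2 * P U (\<lambda>x. a x - b x) (\<lambda>x. a x - b x)"
proof -
  have d: "L2 U (\<lambda>x. a x - b x)" by (rule L2_diff[OF a b])
  have "integral\<^sup>L lebesgue (\<lambda>x. indicator U x * (a x * a x))
     \<le> integral\<^sup>L lebesgue (\<lambda>x. 2 * (indicator U x * (b x * b x)) + 2 * (indicator U x * ((a x - b x) * (a x - b x))))"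
  proof (rule integral_mono)
    show "integrable lebesgue (\<lambda>x. indicator U x * (a x * a x))" by (rule P_int[OF a a])
    show "integrable lebesgue (\<lambda>x. 2 * (indicator U x * (b x * b x)) + 2 * (indicator U x * ((a x - b x) * (a x - b x))))"
      using P_int[OF b b] P_int[OF d d] by simp
    fix x
    have "a x * a x \<le> 2 * (b x * b x) + 2 * ((a x - b x) * (a x - b x))"
    proof -
      have "0 \<le> (2 * b x - a x) * (2 * b x - a x)" by simp
      then show ?thesis by (simp add: algebra_simps)
    qed
    then show "indicator U x * (a x * a x) \<le> 2 * (indicator U x * (b x * b x)) + 2 * (indicator U x * ((a x - b x) * (a x - b x)))"
      by (auto simp: indicator_def)
  qed
  also have "\<dots> = 2 * P U b b + 2 * P U (\<lambda>x. a x - b x) (\<lambda>x. a x - b x)"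
    unfolding P_def LINT_ind using P_int[OF b b] P_int[OF d d] by simp
  finally show ?thesis unfolding P_def LINT_ind .
qed

lemma time_bound:
  assumes w: "wave_sol \<Omega> T f u Gu ut"
  shows "\<exists>C. \<forall>s\<in>{0..T}. P \<Omega> (\<lambda>x. u x s) (\<lambda>x. u x s) \<le> C"
proof -
  note W = wave_facts[OF w]
  have uL: "L2 \<Omega> (\<lambda>x. u x s)" if "s \<in> {0..T}" for s
    using W(1)[OF that] by (simp add: H10_def H1_def)
  have loc: "\<exists>\<delta>>0. \<forall>s\<in>{0..T}. dist s t < \<delta> \<longrightarrow>
      P \<Omega> (\<lambda>x. u x s) (\<lambda>x. u x s) \<le> 2 * P \<Omega> (\<lambda>x. u x t) (\<lambda>x. u x t) + 2"
    if t: "t \<in> {0..T}" for t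
  proof -
    have "\<forall>\<^sub>F s in at t within {0..T}. P \<Omega> (\<lambda>x. u x s - u x t) (\<lambda>x. u x s - u x t) < 1"
      by (rule order_tendstoD(2)[OF time_diff_lim[OF w t]]) simp
    then obtain \<delta> where \<delta>: "\<delta> > 0" and h0: "\<forall>s\<in>{0..T}. s \<noteq> t \<and> dist s t < \<delta> \<longrightarrow>
        P \<Omega> (\<lambda>x. u x s - u x t) (\<lambda>x. u x s - u x t) < 1"
      unfolding eventually_at by (elim exE conjE) (rule that)
    have h: "P \<Omega> (\<lambda>x. u x s - u x t) (\<lambda>x. u x s - u x t) < 1"
      if "s \<in> {0..T}" "s \<noteq> t" "dist s t < \<delta>" for s
      using h0 that by simp
    have "P \<Omega> (\<lambda>x. u x s) (\<lambda>x. u x s) \<le> 2 * P \<Omega> (\<lambda>x. u x t) (\<lambda>x. u x t) + 2"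
      if s: "s \<in> {0..T}" "dist s t < \<delta>" for s
    proof (cases "s = t")
      case True
      then show ?thesis using P_nonneg[of \<Omega> "\<lambda>x. u x t"] by simp
    next
      case False
      then have "P \<Omega> (\<lambda>x. u x s - u x t) (\<lambda>x. u x s - u x t) < 1" by (intro h s False)
      then show ?thesis using P_sq_bound[OF uL[OF s(1)] uL[OF t]] by linarith
    qed
    then show ?thesis using \<delta> by (intro exI[of _ \<delta>]) simp
  qed
  have ex: "\<forall>t\<in>{0..T}. \<exists>\<delta>. \<delta> > 0 \<and> (\<forall>s\<in>{0..T}. dist s t < \<delta> \<longrightarrow>
      P \<Omega> (\<lambda>x. u x s) (\<lambda>x. u x s) \<le> 2 * P \<Omega> (\<lambda>x. u x t) (\<lambda>x. u x t) + 2)" by (intro ballI loc)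
  obtain \<delta> where \<delta>0: "\<forall>t\<in>{0..T}. \<delta> t > 0 \<and> (\<forall>s\<in>{0..T}. dist s t < \<delta> t \<longrightarrow>
      P \<Omega> (\<lambda>x. u x s) (\<lambda>x. u x s) \<le> 2 * P \<Omega> (\<lambda>x. u x t) (\<lambda>x. u x t) + 2)"
    using bchoice[OF ex] by (elim exE) (rule that)
  have \<delta>: "\<delta> t > 0 \<and> (\<forall>s\<in>{0..T}. dist s t < \<delta> t \<longrightarrow>
      P \<Omega> (\<lambda>x. u x s) (\<lambda>x. u x s) \<le> 2 * P \<Omega> (\<lambda>x. u x t) (\<lambda>x. u x t) + 2)" if "t \<in> {0..T}" for t
    using \<delta>0 that by (rule bspec)
  have cov: "{0..T} \<subseteq> (\<Union>t\<in>{0..T}. ball t (\<delta> t))"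
  proof
    fix s assume "s \<in> {0..T}" then show "s \<in> (\<Union>t\<in>{0..T}. ball t (\<delta> t))"
      using \<delta>[of s] by (intro UN_I[of s]) auto
  qed
  obtain C' where C': "C' \<subseteq> {0..T}" "finite C'" "{0..T} \<subseteq> (\<Union>t\<in>C'. ball t (\<delta> t))"
    using compactE_image[OF compact_Icc _ cov] by blast
  define C where "C = (\<Sum>t\<in>C'. 2 * P \<Omega> (\<lambda>x. u x t) (\<lambda>x. u x t) + 2)"
  have "P \<Omega> (\<lambda>x. u x s) (\<lambda>x. u x s) \<le> C" if s: "s \<in> {0..T}" for s
  proof -
    obtain t where t: "t \<in> C'" "s \<in> ball t (\<delta> t)" using C'(3) s by auto
    have tT: "t \<in> {0..T}" using t(1) C'(1) by auto
    have "dist s t < \<delta> t" using t(2) by (simp add: dist_commute)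
    have "P \<Omega> (\<lambda>x. u x s) (\<lambda>x. u x s) \<le> 2 * P \<Omega> (\<lambda>x. u x t) (\<lambda>x. u x t) + 2"
      using \<delta>[OF tT] s \<open>dist s t < \<delta> t\<close> by blast
    also have "\<dots> \<le> C" unfolding C_def
      by (rule member_le_sum[OF t(1) _ C'(2)]) (simp add: P_nonneg add_nonneg_nonneg)
    finally show ?thesis .
  qed
  then show ?thesis by blast
qed

lemma sf_lebesgue: "sigma_finite_measure (lebesgue :: 'a::euclidean_space measure)"
proof
  let ?A = "range (\<lambda>n::nat. cball (0::'a) (real n))"
  have "countable ?A" by simp
  moreover have "?A \<subseteq> sets lebesgue" by auto
  moreover have "\<Union>?A = space lebesgue"
  proof -
    have "x \<in> \<Union>?A" for x :: 'a
    proof -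
      obtain n :: nat where "norm x \<le> real n" using real_arch_simple by blast
      then show ?thesis by (auto simp: dist_norm)
    qed
    then show ?thesis by auto
  qed
  moreover have "\<forall>a\<in>?A. emeasure lebesgue a \<noteq> \<infinity>"
  proof
    fix a assume "a \<in> ?A"
    then obtain n :: nat where a: "a = cball 0 (real n)" by blast
    have "emeasure lborel a < \<infinity>" unfolding a by (rule emeasure_compact_finite) simp
    moreover have "emeasure lebesgue a = emeasure lborel a"
      using emeasure_completion[of a lborel] unfolding a by auto
    ultimately show "emeasure lebesgue a \<noteq> \<infinity>" by simp
  qed
  ultimately show "\<exists>A::'a set set. countable A \<and> A \<subseteq> sets lebesgue \<and> \<Union>A = space lebesgue \<and> (\<forall>a\<in>A. emeasure lebesgue a \<noteq> \<infinity>)"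
    by blast
qed

interpretation LL: pair_sigma_finite "lebesgue :: (real^3) measure" "lebesgue :: real measure"
  unfolding pair_sigma_finite_def by (intro conjI sf_lebesgue)

lemma cont_meas_real: "continuous_on UNIV (f :: real \<Rightarrow> real) \<Longrightarrow> f \<in> borel_measurable lebesgue"
  apply (rule measurable_completion)
  apply (simp add: borel_measurable_continuous_onI)
  done

lemma LINT_ind_real: "(LINT t:S|lebesgue. (f t :: real)) = integral\<^sup>L lebesgue (\<lambda>t. indicator S t * f t)"
  by (simp add: set_lebesgue_integral_def real_scaleR_def)

lemma fubini_part:
  fixes u :: "real^3 \<Rightarrow> real \<Rightarrow> real"
  assumes w: "wave_sol \<Omega> T f u Gu ut" and gL: "L2 \<Omega> g" and T: "0 \<le> T"
  shows "set_integrable lebesgue \<Omega> (\<lambda>x. laplace_T T \<tau> u x * g x)"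
    and "(LINT x:\<Omega>|lebesgue. laplace_T T \<tau> u x * g x) = (LINT t:{0..T}|lebesgue. exp (- \<tau> * t) * P \<Omega> (\<lambda>x. u x t) g)"
proof -
  note W = wave_facts[OF w]
  have uL: "L2 \<Omega> (\<lambda>x. u x s)" if "s \<in> {0..T}" for s
    using W(1)[OF that] by (simp add: H10_def H1_def)
  have umeas: "(\<lambda>p. indicator (\<Omega> \<times> {0..T}) p * u (fst p) (snd p)) \<in> borel_measurable (lebesgue \<Otimes>\<^sub>M lebesgue)"
    using w by (simp add: wave_sol_def)
  define G0 where "G0 x = indicator \<Omega> x * g x" for x
  have G0m: "G0 \<in> borel_measurable lebesgue" using L2_meas[OF gL] by (simp add: G0_def[abs_def])
  have em: "(\<lambda>t::real. exp (- \<tau> * t)) \<in> borel_measurable lebesgue"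
    by (rule cont_meas_real) (intro continuous_intros)
  define F where "F p = G0 (fst p) * exp (- \<tau> * snd p) * (indicator (\<Omega> \<times> {0..T}) p * u (fst p) (snd p))" for p
  have Fm: "F \<in> borel_measurable (lebesgue \<Otimes>\<^sub>M lebesgue)"
    unfolding F_def[abs_def]
    by (intro borel_measurable_times measurable_compose[OF measurable_fst G0m]
          measurable_compose[OF measurable_snd em] umeas)
  have Fxt: "F (x,t) = indicator \<Omega> x * g x * (indicator {0..T} t * (exp (- \<tau> * t) * u x t))" for x t
    by (simp add: F_def G0_def indicator_times indicator_def)
  obtain C where C: "\<And>s. s \<in> {0..T} \<Longrightarrow> P \<Omega> (\<lambda>x. u x s) (\<lambda>x. u x s) \<le> C"
    using time_bound[OF w] by blast
  define E where "E = exp (\<bar>\<tau>\<bar> * T)"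
  define K where "K = E * (P \<Omega> g g + max C 0)"
  have inner: "(\<integral>\<^sup>+x. ennreal (norm (F (x,t))) \<partial>lebesgue) \<le> ennreal (K * indicator {0..T} t)" for t
  proof (cases "t \<in> {0..T}")
    case False
    then show ?thesis by (simp add: Fxt)
  next
    case True
    have e: "exp (- \<tau> * t) \<le> E"
    proof -
      have "- \<tau> * t \<le> \<bar>\<tau>\<bar> * T"
      proof -
        have "- \<tau> * t \<le> \<bar>\<tau>\<bar> * t" using True by (intro mult_right_mono) auto
        also have "\<dots> \<le> \<bar>\<tau>\<bar> * T" using True by (intro mult_left_mono) auto
        finally show ?thesis .
      qed
      then show ?thesis unfolding E_def by simp
    qed
    define b where "b x = E * (indicator \<Omega> x * (g x)\<^sup>2 + indicator \<Omega> x * (u x t)\<^sup>2)" for x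
    have bint: "integrable lebesgue b"
      unfolding b_def using L2_sq_int[OF gL] L2_sq_int[OF uL[OF True]] by auto
    have bnd: "norm (F (x,t)) \<le> b x" for x
    proof -
      have "norm (F (x,t)) = indicator \<Omega> x * (exp (- \<tau> * t) * \<bar>g x * u x t\<bar>)"
        using True by (simp add: Fxt abs_mult indicator_def)
      also have "\<dots> \<le> indicator \<Omega> x * (E * ((g x)\<^sup>2 + (u x t)\<^sup>2))"
        by (intro mult_left_mono mult_mono e abs_prod_sq_le) (auto simp: E_def)
      also have "\<dots> = b x" by (simp add: b_def algebra_simps)
      finally show ?thesis .
    qed
    have "(\<integral>\<^sup>+x. ennreal (norm (F (x,t))) \<partial>lebesgue) \<le> (\<integral>\<^sup>+x. ennreal (b x) \<partial>lebesgue)"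
      by (intro nn_integral_mono ennreal_leI) (use bnd in simp)
    also have "\<dots> = ennreal (integral\<^sup>L lebesgue b)"
      by (rule nn_integral_eq_integral[OF bint]) (auto simp: b_def E_def)
    also have "ennreal (integral\<^sup>L lebesgue b) \<le> ennreal K"
    proof (rule ennreal_leI)
      have "integral\<^sup>L lebesgue b = E * (P \<Omega> g g + P \<Omega> (\<lambda>x. u x t) (\<lambda>x. u x t))"
        unfolding b_def P_sq LINT_ind using L2_sq_int[OF gL] L2_sq_int[OF uL[OF True]] by simp
      also have "\<dots> \<le> K"
        unfolding K_def using C[OF True] by (intro mult_left_mono) (auto simp: E_def)
      finally show "integral\<^sup>L lebesgue b \<le> K" .
    qed
    finally show ?thesis using True by simp
  qed
  have "(\<integral>\<^sup>+p. ennreal (norm (F p)) \<partial>(lebesgue \<Otimes>\<^sub>M lebesgue))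
      = (\<integral>\<^sup>+t. (\<integral>\<^sup>+x. ennreal (norm (F (x,t))) \<partial>lebesgue) \<partial>lebesgue)"
    by (rule LL.nn_integral_snd[symmetric]) (use Fm in measurable)
  also have "\<dots> \<le> (\<integral>\<^sup>+t. ennreal K * indicator {0..T} t \<partial>lebesgue)"
  proof (intro nn_integral_mono)
    fix t
    have "ennreal (K * indicator {0..T} t) = ennreal K * indicator {0..T} t"
      by (simp add: indicator_def)
    then show "(\<integral>\<^sup>+x. ennreal (norm (F (x,t))) \<partial>lebesgue) \<le> ennreal K * indicator {0..T} t"
      using inner[of t] by simp
  qed
  also have "\<dots> = ennreal K * emeasure lebesgue {0..T}"
    by (rule nn_integral_cmult_indicator) simp
  also have "\<dots> < \<infinity>"
  proof -
    have "emeasure lebesgue {0..T::real} < \<infinity>"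
      using emeasure_compact_finite[of "{0..T::real}"] emeasure_completion[of "{0..T::real}" lborel] by auto
    then show ?thesis by (simp add: ennreal_mult_less_top)
  qed
  finally have Fint: "integrable (lebesgue \<Otimes>\<^sub>M lebesgue) F"
    using Fm by (simp add: integrable_iff_bounded)
  have lhs_pt: "indicator \<Omega> x * (laplace_T T \<tau> u x * g x) = (\<integral>t. F (x,t) \<partial>lebesgue)" for x
  proof -
    have "(\<integral>t. F (x,t) \<partial>lebesgue) = (\<integral>t. (indicator \<Omega> x * g x) * (indicator {0..T} t * (exp (- \<tau> * t) * u x t)) \<partial>lebesgue)"
      by (simp add: Fxt)
    also have "\<dots> = (indicator \<Omega> x * g x) * (\<integral>t. indicator {0..T} t * (exp (- \<tau> * t) * u x t) \<partial>lebesgue)"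
      by (rule integral_mult_right_zero)
    also have "\<dots> = indicator \<Omega> x * (laplace_T T \<tau> u x * g x)"
      by (simp add: laplace_T_def LINT_ind_real)
    finally show ?thesis by simp
  qed
  have rhs_pt: "(\<integral>x. F (x,t) \<partial>lebesgue) = indicator {0..T} t * (exp (- \<tau> * t) * P \<Omega> (\<lambda>x. u x t) g)" for t
  proof -
    have "(\<integral>x. F (x,t) \<partial>lebesgue) = (\<integral>x. (indicator {0..T} t * exp (- \<tau> * t)) * (indicator \<Omega> x * (u x t * g x)) \<partial>lebesgue)"
      by (simp add: Fxt algebra_simps)
    also have "\<dots> = (indicator {0..T} t * exp (- \<tau> * t)) * (\<integral>x. indicator \<Omega> x * (u x t * g x) \<partial>lebesgue)"
      by (rule integral_mult_right_zero)
    finally show ?thesis by (simp add: P_def LINT_ind)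
  qed
  have Fint': "integrable (lebesgue \<Otimes>\<^sub>M lebesgue) (\<lambda>(x, y). F (x, y))"
    using Fint by (simp add: case_prod_unfold)
  show "set_integrable lebesgue \<Omega> (\<lambda>x. laplace_T T \<tau> u x * g x)"
    using LL.integrable_fst'[OF Fint] unfolding set_integrable_def by (simp add: lhs_pt[symmetric])
  have "(LINT x:\<Omega>|lebesgue. laplace_T T \<tau> u x * g x) = (\<integral>x. (\<integral>t. F (x,t) \<partial>lebesgue) \<partial>lebesgue)"
    unfolding LINT_ind by (simp add: lhs_pt)
  also have "\<dots> = (\<integral>t. (\<integral>x. F (x,t) \<partial>lebesgue) \<partial>lebesgue)"
    using LL.Fubini_integral[OF Fint', symmetric] by simp
  also have "\<dots> = (LINT t:{0..T}|lebesgue. exp (- \<tau> * t) * P \<Omega> (\<lambda>x. u x t) g)"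
    unfolding LINT_ind_real by (simp add: rhs_pt)
  finally show "(LINT x:\<Omega>|lebesgue. laplace_T T \<tau> u x * g x) = (LINT t:{0..T}|lebesgue. exp (- \<tau> * t) * P \<Omega> (\<lambda>x. u x t) g)" .
qed

definition Eb :: "(real^3) set \<Rightarrow> real \<Rightarrow> (real^3 \<Rightarrow> real) \<Rightarrow> (real^3 \<Rightarrow> real^3) \<Rightarrow> (real^3 \<Rightarrow> real) \<Rightarrow> (real^3 \<Rightarrow> real^3) \<Rightarrow> real" where
  "Eb U t a G b H = (LINT x:U|lebesgue. G x \<bullet> H x + t * a x * b x)"

definition L2v :: "(real^3) set \<Rightarrow> (real^3 \<Rightarrow> real) \<Rightarrow> (real^3 \<Rightarrow> real^3) \<Rightarrow> bool" where
  "L2v U a G = (L2 U a \<and> (\<forall>i. L2 U (\<lambda>x. G x $ i)))"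

lemma H1_L2v: "H1 U a G \<Longrightarrow> L2v U a G" by (simp add: H1_def L2v_def)
lemma H10_L2v: "H10 U a G \<Longrightarrow> L2v U a G" by (simp add: H10_def H1_def L2v_def)
lemma L2v_restrict: "L2v UNIV a G \<Longrightarrow> S \<in> sets lebesgue \<Longrightarrow> L2v S a G"
  by (simp add: L2v_def L2_restrict)
lemma L2v_add: "L2v U a G \<Longrightarrow> L2v U b H \<Longrightarrow> L2v U (\<lambda>x. a x + b x) (\<lambda>x. G x + H x)"
  by (simp add: L2v_def L2_add)

lemma Eb_P:
  assumes "L2v U a G" "L2v U b H"
  shows "Eb U t a G b H = P U (\<lambda>x. G x$1) (\<lambda>x. H x$1) + P U (\<lambda>x. G x$2) (\<lambda>x. H x$2) + P U (\<lambda>x. G x$3) (\<lambda>x. H x$3) + t * P U a b"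
  unfolding Eb_def using assms by (intro E_split) (auto simp: L2v_def)

lemma Eb_add2:
  assumes a: "L2v U a G" and b1: "L2v U b1 K1" and b2: "L2v U b2 K2"
  shows "Eb U t a G (\<lambda>x. b1 x + b2 x) (\<lambda>x. K1 x + K2 x) = Eb U t a G b1 K1 + Eb U t a G b2 K2"
proof -
  have L: "L2 U a" "\<And>i. L2 U (\<lambda>x. G x $ i)" "L2 U b1" "\<And>i. L2 U (\<lambda>x. K1 x $ i)" "L2 U b2" "\<And>i. L2 U (\<lambda>x. K2 x $ i)"
    using a b1 b2 by (auto simp: L2v_def)
  have s: "P U (\<lambda>x. G x$i) (\<lambda>x. (K1 x + K2 x)$i) = P U (\<lambda>x. G x$i) (\<lambda>x. K1 x$i) + P U (\<lambda>x. G x$i) (\<lambda>x. K2 x$i)" for i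
    using P_add2[OF L(2) L(4) L(6)] by simp
  show ?thesis
    unfolding Eb_P[OF a L2v_add[OF b1 b2]] Eb_P[OF a b1] Eb_P[OF a b2] s P_add2[OF L(1,3,5)]
    by (simp add: algebra_simps)
qed

lemma Eb_sym: "Eb U t a G b H = Eb U t b H a G"
  unfolding Eb_def by (simp add: inner_commute mult.commute mult.left_commute)

lemma Eb_inner:
  assumes "L2v U a G" "L2v U b H"
  shows "(LINT x:U|lebesgue. G x \<bullet> H x) = Eb U t a G b H - t * P U a b"
proof -
  have "(LINT x:U|lebesgue. G x \<bullet> H x) = Eb U 0 a G b H" by (simp add: Eb_def)
  then show ?thesis using Eb_P[OF assms, of 0] Eb_P[OF assms, of t] by simp
qed

lemma L2_indicator:
  fixes B :: "(real^3) set"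
  assumes S: "S \<in> sets lebesgue" and B: "bounded B" "B \<in> sets lebesgue"
  shows "L2 S (indicator B)"
proof (rule L2I)
  show "(\<lambda>x. indicator S x * (indicator B x :: real)) \<in> borel_measurable lebesgue"
  proof -
    have "(\<lambda>x. indicator S x * (indicator B x :: real)) = (indicator (S \<inter> B) :: real^3 \<Rightarrow> real)"
      by (auto simp: indicator_def)
    moreover have "(indicator (S \<inter> B) :: real^3 \<Rightarrow> real) \<in> borel_measurable lebesgue"
      using S B(2) by (intro borel_measurable_indicator sets.Int)
    ultimately show ?thesis by simp
  qed
  obtain e where e0: "\<forall>x\<in>B. norm x \<le> e" using B(1) unfolding bounded_iff by (elim exE)
  have e: "S \<inter> B \<subseteq> cball 0 e" using e0 by (auto simp: dist_norm)
  have "emeasure lebesgue (S \<inter> B) \<le> emeasure lebesgue (cball (0::real^3) e)"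
    by (rule emeasure_mono[OF e]) simp
  also have "\<dots> < \<infinity>" by (rule compact_lebesgue_finite) simp
  finally have fin: "emeasure lebesgue (S \<inter> B) < \<infinity>" .
  have "integrable lebesgue (indicator (S \<inter> B) :: real^3 \<Rightarrow> real)"
    by (rule integrable_real_indicator[OF sets.Int[OF S B(2)] fin])
  moreover have "(\<lambda>x. indicator S x * (indicator B x :: real)\<^sup>2) = (indicator (S \<inter> B) :: real^3 \<Rightarrow> real)"
    by (auto simp: indicator_def)
  ultimately show "integrable lebesgue (\<lambda>x. indicator S x * (indicator B x :: real)\<^sup>2)" by simp
qed

lemma UNIV_split:
  fixes D :: "(real^3) set" and X :: "real^3 \<Rightarrow> real"
  assumes oD: "open D" and nf: "negligible (frontier D)" and X: "integrable lebesgue X"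
  shows "integral\<^sup>L lebesgue X = (LINT x:D|lebesgue. X x) + (LINT x:(- closure D)|lebesgue. X x)"
proof -
  have Dm: "D \<in> sets lebesgue" using oD by simp
  have Om: "- closure D \<in> sets lebesgue" by simp
  have i1: "integrable lebesgue (\<lambda>x. indicator D x * X x)"
    using integrable_mult_indicator[OF Dm X] by simp
  have i2: "integrable lebesgue (\<lambda>x. indicator (- closure D) x * X x)"
    using integrable_mult_indicator[OF Om X] by simp
  have N: "frontier D \<in> null_sets lebesgue" using nf by (simp add: negligible_iff_null_sets)
  have "AE x in lebesgue. X x = indicator D x * X x + indicator (- closure D) x * X x"
  proof (rule AE_I'[OF N])
    show "{x \<in> space lebesgue. \<not> X x = indicator D x * X x + indicator (- closure D) x * X x} \<subseteq> frontier D"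
    proof
      fix x assume "x \<in> {x \<in> space lebesgue. \<not> X x = indicator D x * X x + indicator (- closure D) x * X x}"
      then have a: "X x \<noteq> indicator D x * X x + indicator (- closure D) x * X x" by simp
      have xD: "x \<notin> D"
      proof
        assume "x \<in> D"
        then have "x \<in> closure D" using closure_subset by blast
        then show False using a \<open>x \<in> D\<close> by (simp add: indicator_def)
      qed
      have "x \<in> closure D"
      proof (rule ccontr)
        assume "x \<notin> closure D"
        then show False using a xD by (simp add: indicator_def)
      qed
      with xD show "x \<in> frontier D" using oD by (simp add: frontier_def interior_open)
    qed
  qed
  then have "integral\<^sup>L lebesgue X = integral\<^sup>L lebesgue (\<lambda>x. indicator D x * X x + indicator (- closure D) x * X x)"
    by (rule integral_cong_AE[rotated 2]) (use X i1 i2 in auto)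
  also have "\<dots> = (LINT x:D|lebesgue. X x) + (LINT x:(- closure D)|lebesgue. X x)"
    unfolding LINT_ind using i1 i2 by simp
  finally show ?thesis .
qed

lemma Eb_integrand_int:
  assumes "L2v U a G" "L2v U b H"
  shows "integrable lebesgue (\<lambda>x. indicator U x * (G x \<bullet> H x + t * a x * b x))"
proof -
  have L: "L2 U a" "\<And>i. L2 U (\<lambda>x. G x $ i)" "L2 U b" "\<And>i. L2 U (\<lambda>x. H x $ i)"
    using assms by (auto simp: L2v_def)
  have "integrable lebesgue (\<lambda>x. indicator U x * (G x$1 * H x$1) + indicator U x * (G x$2 * H x$2)
      + indicator U x * (G x$3 * H x$3) + t * (indicator U x * (a x * b x)))"
    using P_int[OF L(2)[of 1] L(4)[of 1]] P_int[OF L(2)[of 2] L(4)[of 2]] P_int[OF L(2)[of 3] L(4)[of 3]]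
      P_int[OF L(1) L(3)] by simp
  moreover have "(\<lambda>x. indicator U x * (G x$1 * H x$1) + indicator U x * (G x$2 * H x$2)
      + indicator U x * (G x$3 * H x$3) + t * (indicator U x * (a x * b x)))
    = (\<lambda>x. indicator U x * (G x \<bullet> H x + t * a x * b x))"
    by (simp add: inner3 algebra_simps)
  ultimately show ?thesis by simp
qed

lemma P_zero_lemma:
  assumes "L2 U a" "L2 U b" "(LINT x:U|lebesgue. (a x)\<^sup>2) = 0"
  shows "P U a b = 0"
proof -
  have "\<bar>P U a b\<bar> \<le> sqrt (P U a a) * sqrt (P U b b)" by (rule P_CS[OF assms(1,2)])
  also have "P U a a = 0" using assms(3) by (simp add: P_sq)
  finally show ?thesis by simp
qed

theorem proposition2p1:
  fixes D :: "(real^3) set" and T \<tau> r r' :: real and c c' :: "real^3"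
    and vf vg ef eg Z :: "real^3 \<Rightarrow> real" and Gvf Gvg Gef Geg GZ :: "real^3 \<Rightarrow> real^3"
    and u ut :: "real^3 \<Rightarrow> real \<Rightarrow> real" and Gu :: "real^3 \<Rightarrow> real \<Rightarrow> real^3"
  defines "\<Omega> \<equiv> - closure D"
    and "f \<equiv> indicator (ball c r) :: real^3 \<Rightarrow> real"
    and "g \<equiv> indicator (ball c' r') :: real^3 \<Rightarrow> real"
  assumes "D \<noteq> {}" and "open D" and "bounded D" and "C2_boundary D"
    and "connected (- closure D)"
    and "0 < T"
    and "0 < r" and "0 < r'"
    and "closure (ball c r) \<inter> closure D = {}" and "closure (ball c' r') \<inter> closure D = {}"
    and "0 < \<tau>"
    and "wave_sol \<Omega> T f u Gu ut"
    and "helmholtz_R3 \<tau> f vf Gvf" and "helmholtz_R3 \<tau> g vg Gvg"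
    and "exterior_dirichlet \<Omega> \<tau> vf Gvf ef Gef" and "exterior_dirichlet \<Omega> \<tau> vg Gvg eg Geg"
    and "dirichlet_source \<Omega> \<tau> (\<lambda>x. ut x T + \<tau> * u x T) Z GZ"
  shows "(LINT x:\<Omega>|lebesgue. f x * vg x - laplace_T T \<tau> u x * g x)
       = (LINT x:D|lebesgue. Gvf x \<bullet> Gvg x + \<tau>\<^sup>2 * vf x * vg x)
         + (LINT x:\<Omega>|lebesgue. Gef x \<bullet> Geg x + \<tau>\<^sup>2 * ef x * eg x)
         - exp (- \<tau> * T) * (LINT x:\<Omega>|lebesgue. GZ x \<bullet> Gvg x + \<tau>\<^sup>2 * Z x * vg x)"
proof -
  have o\<Omega>: "open \<Omega>" unfolding \<Omega>_def by auto
  have \<Omega>m: "\<Omega> \<in> sets lebesgue" using o\<Omega> by simp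
  have T0: "0 \<le> T" using assms(9) by simp
  have nf: "negligible (frontier D)" by (rule frontier_negligible[OF assms(6,5,7)])
  have bf: "ball c r \<subseteq> \<Omega>" using assms(12) closure_subset[of "ball c r"] unfolding \<Omega>_def by blast
  have bg: "ball c' r' \<subseteq> \<Omega>" using assms(13) closure_subset[of "ball c' r'"] unfolding \<Omega>_def by blast
  have fL: "L2 \<Omega> f" unfolding f_def by (rule L2_indicator[OF \<Omega>m]) auto
  have gL: "L2 \<Omega> g" unfolding g_def by (rule L2_indicator[OF \<Omega>m]) auto
  have f0: "f x = 0" if "x \<notin> \<Omega>" for x using bf that unfolding f_def by (auto simp: indicator_def)
  define t2 where "t2 = \<tau>\<^sup>2"
  note hf = assms(16)[unfolded helmholtz_R3_def] and hg = assms(17)[unfolded helmholtz_R3_def]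
  note xf = assms(18)[unfolded exterior_dirichlet_def] and xg = assms(19)[unfolded exterior_dirichlet_def]
  note dz = assms(20)[unfolded dirichlet_source_def]
  note w = assms(15)
  note W = wave_facts[OF w]
  have Lvf: "L2v \<Omega> vf Gvf" using L2v_restrict[OF H1_L2v \<Omega>m] hf by blast
  have Lvg: "L2v \<Omega> vg Gvg" using L2v_restrict[OF H1_L2v \<Omega>m] hg by blast
  have LvfU: "L2v UNIV vf Gvf" using H1_L2v hf by blast
  have LvgU: "L2v UNIV vg Gvg" using H1_L2v hg by blast
  have Lef: "L2v \<Omega> ef Gef" using H1_L2v xf by blast
  have Leg: "L2v \<Omega> eg Geg" using H1_L2v xg by blast
  have LZ: "L2v \<Omega> Z GZ" using H10_L2v dz by blast
  have Eef: "Eb \<Omega> t2 ef Gef \<phi> G\<phi> = 0" if "H10 \<Omega> \<phi> G\<phi>" for \<phi> G\<phi>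
    using xf that by (simp add: Eb_def t2_def)
  have Eeg: "Eb \<Omega> t2 eg Geg \<phi> G\<phi> = 0" if "H10 \<Omega> \<phi> G\<phi>" for \<phi> G\<phi>
    using xg that by (simp add: Eb_def t2_def)
  define \<phi> where "\<phi> x = eg x + vg x" for x
  define G\<phi> where "G\<phi> x = Geg x + Gvg x" for x
  have h\<phi>: "H10 \<Omega> \<phi> G\<phi>" using xg by (simp add: \<phi>_def[abs_def] G\<phi>_def[abs_def])
  have L\<phi>: "L2v \<Omega> \<phi> G\<phi>" by (rule H10_L2v[OF h\<phi>])
  have \<phi>L: "L2 \<Omega> \<phi>" using L\<phi> by (simp add: L2v_def)
  have vgL: "L2 \<Omega> vg" "L2 \<Omega> eg" using Lvg Leg by (auto simp: L2v_def)
  have s1: "Eb \<Omega> t2 vf Gvf eg Geg + Eb \<Omega> t2 vf Gvf vg Gvg = P \<Omega> f eg + P \<Omega> f vg"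
  proof -
    have "Eb \<Omega> t2 vf Gvf \<phi> G\<phi> = P \<Omega> f \<phi>"
      using K_lemma[OF assms(16) fL \<Omega>m h\<phi>] by (simp add: Eb_def t2_def)
    moreover have "Eb \<Omega> t2 vf Gvf \<phi> G\<phi> = Eb \<Omega> t2 vf Gvf eg Geg + Eb \<Omega> t2 vf Gvf vg Gvg"
      unfolding \<phi>_def[abs_def] G\<phi>_def[abs_def] by (rule Eb_add2[OF Lvf Leg Lvg])
    moreover have "P \<Omega> f \<phi> = P \<Omega> f eg + P \<Omega> f vg"
      unfolding \<phi>_def[abs_def] by (rule P_add2[OF fL vgL(2) vgL(1)])
    ultimately show ?thesis by simp
  qed
  have s2: "Eb \<Omega> t2 eg Geg ef Gef + Eb \<Omega> t2 eg Geg vf Gvf = 0"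
  proof -
    have "Eb \<Omega> t2 eg Geg (\<lambda>x. ef x + vf x) (\<lambda>x. Gef x + Gvf x) = 0"
      using Eeg xf by blast
    then show ?thesis using Eb_add2[OF Leg Lef Lvf] by simp
  qed
  have s3: "Eb D t2 vf Gvf vg Gvg + Eb \<Omega> t2 vf Gvf vg Gvg = P \<Omega> f vg"
  proof -
    have "(LINT x|lebesgue. Gvf x \<bullet> Gvg x + \<tau>\<^sup>2 * vf x * vg x) = (LINT x|lebesgue. f x * vg x)"
      using hf hg by blast
    moreover have "(LINT x|lebesgue. Gvf x \<bullet> Gvg x + \<tau>\<^sup>2 * vf x * vg x)
        = (LINT x:D|lebesgue. Gvf x \<bullet> Gvg x + \<tau>\<^sup>2 * vf x * vg x) + (LINT x:\<Omega>|lebesgue. Gvf x \<bullet> Gvg x + \<tau>\<^sup>2 * vf x * vg x)"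
      unfolding \<Omega>_def
      by (rule UNIV_split[OF assms(5) nf]) (use Eb_integrand_int[OF LvfU LvgU, of "\<tau>\<^sup>2"] in simp)
    moreover have "(LINT x|lebesgue. f x * vg x) = P \<Omega> f vg"
      unfolding P_def by (rule LINT_UNIV_restrict) (simp add: f0)
    ultimately show ?thesis by (simp add: Eb_def t2_def)
  qed
  have JE: "Eb D t2 vf Gvf vg Gvg + Eb \<Omega> t2 ef Gef eg Geg = - P \<Omega> f eg"
    using s1 s2 s3 Eb_sym[of \<Omega> t2 ef Gef eg Geg] Eb_sym[of \<Omega> t2 vf Gvf eg Geg] by linarith
  define F where "F x = ut x T + \<tau> * u x T" for x
  have s6: "P \<Omega> F \<phi> = - Eb \<Omega> t2 Z GZ vg Gvg"
  proof -
    have "Eb \<Omega> t2 Z GZ \<phi> G\<phi> = - P \<Omega> F \<phi>"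
      using dz h\<phi> by (simp add: Eb_def t2_def P_def F_def[abs_def])
    moreover have "Eb \<Omega> t2 Z GZ \<phi> G\<phi> = Eb \<Omega> t2 Z GZ eg Geg + Eb \<Omega> t2 Z GZ vg Gvg"
      unfolding \<phi>_def[abs_def] G\<phi>_def[abs_def] by (rule Eb_add2[OF LZ Leg Lvg])
    moreover have "Eb \<Omega> t2 Z GZ eg Geg = 0"
      using Eeg[OF conjunct1[OF dz]] Eb_sym[of \<Omega> t2 Z GZ eg Geg] by simp
    ultimately show ?thesis by simp
  qed
  define p where "p s = P \<Omega> (\<lambda>x. u x s) \<phi>" for s
  define Pd where "Pd s = P \<Omega> (\<lambda>x. ut x s) \<phi>" for s
  define q where "q s = P \<Omega> (\<lambda>x. u x s) g" for s
  have us: "H10 \<Omega> (\<lambda>x. u x s) (\<lambda>x. Gu x s)" if "s \<in> {0..T}" for s by (rule W(1)[OF that])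
  have Lus: "L2v \<Omega> (\<lambda>x. u x s) (\<lambda>x. Gu x s)" if "s \<in> {0..T}" for s by (rule H10_L2v[OF us[OF that]])
  have grad_id: "(LINT x:\<Omega>|lebesgue. Gu x s \<bullet> G\<phi> x) = q s - \<tau>\<^sup>2 * p s" if s: "s \<in> {0..T}" for s
  proof -
    have a: "Eb \<Omega> t2 vg Gvg (\<lambda>x. u x s) (\<lambda>x. Gu x s) = P \<Omega> g (\<lambda>x. u x s)"
      using K_lemma[OF assms(17) gL \<Omega>m us[OF s]] by (simp add: Eb_def t2_def)
    have b: "Eb \<Omega> t2 eg Geg (\<lambda>x. u x s) (\<lambda>x. Gu x s) = 0" by (rule Eeg[OF us[OF s]])
    have c: "Eb \<Omega> t2 (\<lambda>x. u x s) (\<lambda>x. Gu x s) \<phi> G\<phi>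
        = Eb \<Omega> t2 (\<lambda>x. u x s) (\<lambda>x. Gu x s) eg Geg + Eb \<Omega> t2 (\<lambda>x. u x s) (\<lambda>x. Gu x s) vg Gvg"
      unfolding \<phi>_def[abs_def] G\<phi>_def[abs_def] by (rule Eb_add2[OF Lus[OF s] Leg Lvg])
    have "(LINT x:\<Omega>|lebesgue. Gu x s \<bullet> G\<phi> x) = Eb \<Omega> t2 (\<lambda>x. u x s) (\<lambda>x. Gu x s) \<phi> G\<phi> - t2 * P \<Omega> (\<lambda>x. u x s) \<phi>"
      by (rule Eb_inner[OF Lus[OF s] L\<phi>])
    also have "\<dots> = P \<Omega> g (\<lambda>x. u x s) - t2 * P \<Omega> (\<lambda>x. u x s) \<phi>"
      using a b c Eb_sym[of \<Omega> t2 "\<lambda>x. u x s" "\<lambda>x. Gu x s" eg Geg]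
        Eb_sym[of \<Omega> t2 "\<lambda>x. u x s" "\<lambda>x. Gu x s" vg Gvg] by simp
    finally show ?thesis by (simp add: q_def p_def t2_def P_sym)
  qed
  have dp: "(p has_real_derivative Pd t) (at t within {0..T})" if "t \<in> {0..T}" for t
    unfolding p_def[abs_def] Pd_def by (rule time_deriv[OF w \<phi>L that])
  have cq: "continuous_on {0..T} q" unfolding q_def[abs_def] by (rule time_cont_on[OF w gL])
  have eqP: "Pd t = Pd 0 - integral {0..t} (\<lambda>s. q s - \<tau>\<^sup>2 * p s)" if t: "t \<in> {0..T}" for t
  proof -
    have "Pd t - Pd 0 = - integral {0..t} (\<lambda>s. LINT x:\<Omega>|lebesgue. Gu x s \<bullet> G\<phi> x)"
      using W(5)[OF h\<phi> t] by (simp add: Pd_def P_def)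
    also have "integral {0..t} (\<lambda>s. LINT x:\<Omega>|lebesgue. Gu x s \<bullet> G\<phi> x) = integral {0..t} (\<lambda>s. q s - \<tau>\<^sup>2 * p s)"
      by (rule integral_cong) (use t grad_id in auto)
    finally show ?thesis by simp
  qed
  have ode: "((\<lambda>t. exp (- \<tau> * t) * q t) has_integral
           (Pd 0 + \<tau> * p 0 - exp (- \<tau> * T) * (Pd T + \<tau> * p T))) {0..T}"
    by (rule ode_part[OF T0 dp cq eqP])
  have p0: "p 0 = 0"
    unfolding p_def using W(6) by (intro P_zero_lemma \<phi>L) (use Lus[of 0] T0 in \<open>auto simp: L2v_def\<close>)
  have Pd0: "Pd 0 = P \<Omega> f \<phi>"
  proof -
    have ut0: "L2 \<Omega> (\<lambda>x. ut x 0)" using W(2)[of 0] T0 by simp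
    have "P \<Omega> (\<lambda>x. ut x 0 - f x) \<phi> = 0"
      by (rule P_zero_lemma[OF L2_diff[OF ut0 fL] \<phi>L W(7)])
    then show ?thesis
      unfolding Pd_def using P_diff2[OF \<phi>L ut0 fL] by (simp add: P_sym)
  qed
  have PdT: "Pd T + \<tau> * p T = P \<Omega> F \<phi>"
  proof -
    have utT: "L2 \<Omega> (\<lambda>x. ut x T)" using W(2)[of T] T0 by simp
    have uT: "L2 \<Omega> (\<lambda>x. u x T)" using Lus[of T] T0 by (simp add: L2v_def)
    have "P \<Omega> \<phi> F = P \<Omega> \<phi> (\<lambda>x. ut x T) + P \<Omega> \<phi> (\<lambda>x. \<tau> * u x T)"
      unfolding F_def[abs_def] by (rule P_add2[OF \<phi>L utT L2_scale[OF uT]])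
    then show ?thesis unfolding Pd_def p_def by (simp add: P_sym P_scale2)
  qed
  have fub1: "set_integrable lebesgue \<Omega> (\<lambda>x. laplace_T T \<tau> u x * g x)"
    by (rule fubini_part(1)[OF w gL T0])
  have fub2: "(LINT x:\<Omega>|lebesgue. laplace_T T \<tau> u x * g x) = (LINT t:{0..T}|lebesgue. exp (- \<tau> * t) * q t)"
    unfolding q_def by (rule fubini_part(2)[OF w gL T0])
  have "(LINT t:{0..T}|lebesgue. exp (- \<tau> * t) * q t) = integral {0..T} (\<lambda>t. exp (- \<tau> * t) * q t)"
    by (rule set_lebesgue_integral_eq_integral(2), rule absolutely_integrable_continuous_real)
       (intro continuous_intros cq)
  also have "\<dots> = Pd 0 + \<tau> * p 0 - exp (- \<tau> * T) * (Pd T + \<tau> * p T)"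
    using ode by (rule integral_unique)
  finally have lap: "(LINT x:\<Omega>|lebesgue. laplace_T T \<tau> u x * g x) = P \<Omega> f \<phi> - exp (- \<tau> * T) * P \<Omega> F \<phi>"
    using fub2 p0 Pd0 PdT by simp
  have lhs: "(LINT x:\<Omega>|lebesgue. f x * vg x - laplace_T T \<tau> u x * g x)
      = P \<Omega> f vg - (LINT x:\<Omega>|lebesgue. laplace_T T \<tau> u x * g x)"
  proof -
    have i1: "integrable lebesgue (\<lambda>x. indicator \<Omega> x * (f x * vg x))" by (rule P_int[OF fL vgL(1)])
    have i2: "integrable lebesgue (\<lambda>x. indicator \<Omega> x * (laplace_T T \<tau> u x * g x))"
      using fub1 by (simp add: set_integrable_def)
    show ?thesis unfolding LINT_ind P_def using i1 i2 by (simp add: right_diff_distrib)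
  qed
  have Pfphi: "P \<Omega> f \<phi> = P \<Omega> f eg + P \<Omega> f vg"
    unfolding \<phi>_def[abs_def] by (rule P_add2[OF fL vgL(2) vgL(1)])
  have "(LINT x:\<Omega>|lebesgue. f x * vg x - laplace_T T \<tau> u x * g x)
     = Eb D t2 vf Gvf vg Gvg + Eb \<Omega> t2 ef Gef eg Geg - exp (- \<tau> * T) * Eb \<Omega> t2 Z GZ vg Gvg"
    using lhs lap s6 JE Pfphi by (simp add: algebra_simps)
  then show ?thesis by (simp add: Eb_def t2_def)
qed

end
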